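(* Let $S_n(\mathbb{C})$ denote the set of complex symmetric $n\times n$ matrices and let $\Phi: S_n(\mathbb{C}) \to M_r(\mathbb{C})$ be a complex linear map preserving zero products (i.e. $\Phi(A)\Phi(B)=0$ whenever $A,B\in S_n(\mathbb{C})$ with $AB=0$). Then: (i) $\Phi(A)$ is an idempotent for every rank one idempotent $A$ in $S_n(\mathbb{R})$ if and only if there exist a nonnegative integer $k$ with $kn\le r$ and an invertible $S\in M_r(\mathbb{C})$ such that $\Phi(A) = S^{-1}\begin{pmatrix} I_k\otimes A & 0\\ 0 & 0_{r-kn}\end{pmatrix}S$ for all $A\in S_n(\mathbb{C})$; (ii) $\Phi(A)$ is a symmetric idempotent for every rank one idempotent $A$ in $S_n(\mathbb{R})$ if and only if the representation in (i) holds with $S$ complex orthogonal ($S^{-1}=S^{\mathrm t}$).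
   Context: $S_n(\mathbb{R})$ denotes the real symmetric $n\times n$ matrices; $I_k\otimes A$ denotes $A\oplus\cdots\oplus A$ ($k$ copies); $S^{\mathrm t}$ is the transpose. *)

theory Defs
  imports "Jordan_Normal_Form.DL_Rank"
begin

definition sym_mats :: "nat \<Rightarrow> complex mat set" where
  "sym_mats n = {A. A \<in> carrier_mat n n \<and> transpose_mat A = A}"

definition real_rank1_sym_idems :: "nat \<Rightarrow> real mat set" where
  "real_rank1_sym_idems n = {A. A \<in> carrier_mat n n \<and> transpose_mat A = A
      \<and> A * A = A \<and> vec_space.rank n A = 1}"

text \<open>The r x r block matrix diag(I_k \<otimes> A, 0_{r-kn}) for A an n x n matrix (needs k*n \<le> r).\<close>
definition block_embed :: "nat \<Rightarrow> nat \<Rightarrow> nat \<Rightarrow> complex mat \<Rightarrow> complex mat" where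
  "block_embed r k n A = mat r r (\<lambda>(i,j).
      if i < k * n \<and> j < k * n \<and> i div n = j div n then A $$ (i mod n, j mod n) else 0)"

end

theory Submission
  imports Defs
begin

lemma mult_entry:
  assumes "A \<in> carrier_mat a b" "B \<in> carrier_mat b c" "i < a" "j < c"
  shows "(A*B)$$(i,j) = (\<Sum>l<b. A$$(i,l) * B$$(l,j))"
  using assms by (auto simp: scalar_prod_def lessThan_atLeast0 intro!: sum.cong)

definition adjc :: "complex mat \<Rightarrow> (nat \<Rightarrow> complex) \<Rightarrow> complex mat" where
  "adjc X v = mat (dim_row X) (Suc (dim_col X)) (\<lambda>(p,q). if q < dim_col X then X$$(p,q) else v p)"
definition adjr :: "complex mat \<Rightarrow> (nat \<Rightarrow> complex) \<Rightarrow> complex mat" where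
  "adjr Y y = mat (Suc (dim_row Y)) (dim_col Y) (\<lambda>(p,q). if p < dim_row Y then Y$$(p,q) else y q)"
definition outer :: "nat \<Rightarrow> (nat \<Rightarrow> complex) \<Rightarrow> (nat \<Rightarrow> complex) \<Rightarrow> complex mat" where
  "outer r v y = mat r r (\<lambda>(p,q). v p * y q)"

lemma outer_dim[simp]: "dim_row (outer r v y) = r" "dim_col (outer r v y) = r"
  by (auto simp: outer_def)
lemma outer_index[simp]: "p < r \<Longrightarrow> q < r \<Longrightarrow> outer r v y $$ (p,q) = v p * y q"
  by (simp add: outer_def)

lemma adjc_carrier: "X \<in> carrier_mat r k \<Longrightarrow> adjc X v \<in> carrier_mat r (Suc k)"
  by (auto simp: adjc_def)
lemma adjr_carrier: "Y \<in> carrier_mat k r \<Longrightarrow> adjr Y y \<in> carrier_mat (Suc k) r"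
  by (auto simp: adjr_def)
lemma outer_carrier[simp]: "outer r v y \<in> carrier_mat r r"
  by (auto simp: outer_def)

lemma adjc_adjr:
  assumes X: "X \<in> carrier_mat r k" and Y: "Y \<in> carrier_mat k r"
  shows "adjc X v * adjr Y y = X * Y + outer r v y"
proof (rule eq_matI)
  fix i j assume i: "i < dim_row (X * Y + outer r v y)" and j: "j < dim_col (X * Y + outer r v y)"
  hence ij: "i < r" "j < r" using X Y by (auto simp: outer_def)
  have "(adjc X v * adjr Y y) $$ (i,j) = (\<Sum>l<Suc k. adjc X v $$ (i,l) * adjr Y y $$ (l,j))"
    by (rule mult_entry[OF adjc_carrier[OF X] adjr_carrier[OF Y] ij])
  also have "\<dots> = (\<Sum>l<k. X $$ (i,l) * Y $$ (l,j)) + v i * y j"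
    using X Y ij by (simp add: adjc_def adjr_def)
  also have "\<dots> = (X*Y)$$(i,j) + outer r v y $$ (i,j)"
    by (simp only: mult_entry[OF X Y ij]) (simp add: outer_def ij)
  also have "\<dots> = (X * Y + outer r v y) $$ (i,j)"
    using X Y ij by (simp add: outer_def)
  finally show "(adjc X v * adjr Y y) $$ (i,j) = (X * Y + outer r v y) $$ (i,j)" .
qed (use X Y in \<open>auto simp: adjc_def adjr_def\<close>)


lemma idem_sweep:
  fixes M :: "complex mat"
  assumes M: "M \<in> carrier_mat r r" "M*M = M"
  shows "j \<le> r \<Longrightarrow> \<exists>k X Y N. X \<in> carrier_mat r k \<and> Y \<in> carrier_mat k r \<and> Y*X = 1\<^sub>m k
     \<and> N \<in> carrier_mat r r \<and> N*N = N \<and> M = X*Y + N \<and> N*X = 0\<^sub>m r k \<and> Y*N = 0\<^sub>m k r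
     \<and> (\<forall>p<r. \<forall>q<j. N$$(p,q) = 0)"
proof (induction j)
  case 0
  show ?case
    apply (rule exI[of _ 0], rule exI[of _ "0\<^sub>m r 0"], rule exI[of _ "0\<^sub>m 0 r"], rule exI[of _ M])
    using M by (auto intro!: eq_matI)
next
  case (Suc j)
  then obtain k X Y N where X: "X \<in> carrier_mat r k" and Y: "Y \<in> carrier_mat k r" and YX: "Y*X = 1\<^sub>m k"
    and N: "N \<in> carrier_mat r r" and NN: "N*N = N" and MXY: "M = X*Y + N" and NX: "N*X = 0\<^sub>m r k"
    and YN: "Y*N = 0\<^sub>m k r" and col0: "\<forall>p<r. \<forall>q<j. N$$(p,q) = 0" by auto
  have jr: "j < r" using Suc by auto
  show ?case
  proof (cases "\<forall>p<r. N$$(p,j) = 0")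
    case True
    then show ?thesis using X Y YX N NN MXY NX YN col0
      by (intro exI[of _ k] exI[of _ X] exI[of _ Y] exI[of _ N]) (auto simp: less_Suc_eq)
  next
    case False
    then obtain i where ir: "i < r" and c0: "N$$(i,j) \<noteq> 0" by auto
    define c where "c = N$$(i,j)"
    define v where "v = (\<lambda>p. N$$(p,j))"
    define y where "y = (\<lambda>q. N$$(i,q) / c)"
    have F1: "(\<Sum>l<r. N$$(p,l) * v l) = v p" if "p < r" for p
      using arg_cong[OF NN, of "\<lambda>A. A$$(p,j)"] mult_entry[OF N N that jr] by (simp add: v_def)
    have F2: "(\<Sum>l<r. y l * N$$(l,q)) = y q" if "q < r" for q
    proof -
      have "(\<Sum>l<r. N$$(i,l) * N$$(l,q)) = N$$(i,q)"
        using arg_cong[OF NN, of "\<lambda>A. A$$(i,q)"] mult_entry[OF N N ir that] by simp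
      thus ?thesis unfolding y_def by (simp add: sum_divide_distrib[symmetric])
    qed
    have F3: "(\<Sum>l<r. y l * v l) = 1"
      using F2[OF jr] c0 by (simp add: v_def y_def c_def)
    have F4: "(\<Sum>l<r. y l * X$$(l,q)) = 0" if "q < k" for q
    proof -
      have "(\<Sum>l<r. N$$(i,l) * X$$(l,q)) = 0"
        using arg_cong[OF NX, of "\<lambda>A. A$$(i,q)"] mult_entry[OF N X ir that] ir that by simp
      thus ?thesis unfolding y_def by (simp add: sum_divide_distrib[symmetric])
    qed
    have F5: "(\<Sum>l<r. Y$$(p,l) * v l) = 0" if "p < k" for p
      using arg_cong[OF YN, of "\<lambda>A. A$$(p,j)"] mult_entry[OF Y N that jr] that jr by (simp add: v_def)
    define N' where "N' = N - outer r v y"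
    define X' where "X' = adjc X v"
    define Y' where "Y' = adjr Y y"
    have N': "N' \<in> carrier_mat r r" using N by (simp add: N'_def minus_carrier_mat)
    have X': "X' \<in> carrier_mat r (Suc k)" using adjc_carrier[OF X] by (simp add: X'_def)
    have Y': "Y' \<in> carrier_mat (Suc k) r" using adjr_carrier[OF Y] by (simp add: Y'_def)
    have N'e: "N'$$(p,q) = N$$(p,q) - v p * y q" if "p < r" "q < r" for p q
      using that N by (simp add: N'_def)
    have X'e: "X'$$(p,q) = (if q < k then X$$(p,q) else v p)" if "p < r" "q < Suc k" for p q
      using that X by (simp add: X'_def adjc_def)
    have Y'e: "Y'$$(p,q) = (if p < k then Y$$(p,q) else y q)" if "p < Suc k" "q < r" for p q
      using that Y by (simp add: Y'_def adjr_def)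
    have "Y'*X' = 1\<^sub>m (Suc k)"
    proof (rule eq_matI)
      fix p q assume p: "p < dim_row (1\<^sub>m (Suc k)::complex mat)" and q: "q < dim_col (1\<^sub>m (Suc k)::complex mat)"
      hence p': "p < Suc k" and q': "q < Suc k" by auto
      have "(Y'*X')$$(p,q) = (\<Sum>l<r. Y'$$(p,l) * X'$$(l,q))" by (rule mult_entry[OF Y' X' p' q'])
      also have "\<dots> = (\<Sum>l<r. (if p < k then Y$$(p,l) else y l) * (if q < k then X$$(l,q) else v l))"
        using p' q' by (intro sum.cong) (auto simp: X'e Y'e)
      also have "\<dots> = 1\<^sub>m (Suc k) $$ (p,q)"
      proof -
        consider "p < k" "q < k" | "p < k" "q = k" | "p = k" "q < k" | "p = k" "q = k"
          using p' q' by linarith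
        thus ?thesis
        proof cases
          case 1 thus ?thesis using arg_cong[OF YX, of "\<lambda>A. A$$(p,q)"] mult_entry[OF Y X, of p q] by simp
        next
          case 2 thus ?thesis using F5[of p] by simp
        next
          case 3 thus ?thesis using F4[of q] by simp
        next
          case 4 thus ?thesis using F3 by simp
        qed
      qed
      finally show "(Y'*X')$$(p,q) = 1\<^sub>m (Suc k) $$ (p,q)" .
    qed (use X' Y' in auto)
    moreover have "N'*N' = N'"
    proof (rule eq_matI)
      fix p q assume "p < dim_row N'" "q < dim_col N'"
      hence p: "p < r" and q: "q < r" using N' by auto
      have "(N'*N')$$(p,q) = (\<Sum>l<r. (N$$(p,l) - v p * y l) * (N$$(l,q) - v l * y q))"
        using mult_entry[OF N' N' p q] p q by (simp add: N'e)
      also have "\<dots> = (\<Sum>l<r. N$$(p,l) * N$$(l,q)) - v p * (\<Sum>l<r. y l * N$$(l,q))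
             - (\<Sum>l<r. N$$(p,l) * v l) * y q + v p * (\<Sum>l<r. y l * v l) * y q"
        by (simp add: algebra_simps sum_subtractf sum.distrib sum_distrib_left sum_distrib_right)
      also have "\<dots> = N$$(p,q) - v p * y q"
        using arg_cong[OF NN, of "\<lambda>A. A$$(p,q)"] mult_entry[OF N N p q] F1[OF p] F2[OF q] F3 by simp
      finally show "(N'*N')$$(p,q) = N'$$(p,q)" using N'e[OF p q] by simp
    qed (use N' in auto)
    moreover have "M = X'*Y' + N'"
    proof -
      have "X'*Y' = X*Y + outer r v y" unfolding X'_def Y'_def by (rule adjc_adjr[OF X Y])
      thus ?thesis unfolding MXY using X Y N by (auto simp: N'_def intro!: eq_matI)
    qed
    moreover have "N'*X' = 0\<^sub>m r (Suc k)"
    proof (rule eq_matI)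
      fix p q assume "p < dim_row (0\<^sub>m r (Suc k)::complex mat)" "q < dim_col (0\<^sub>m r (Suc k)::complex mat)"
      hence p: "p < r" and q: "q < Suc k" by auto
      have "(N'*X')$$(p,q) = (\<Sum>l<r. (N$$(p,l) - v p * y l) * (if q < k then X$$(l,q) else v l))"
        using mult_entry[OF N' X' p q] p q by (simp add: N'e X'e)
      also have "\<dots> = 0"
      proof (cases "q < k")
        case True
        have "(\<Sum>l<r. (N$$(p,l) - v p * y l) * X$$(l,q)) = (\<Sum>l<r. N$$(p,l) * X$$(l,q)) - v p * (\<Sum>l<r. y l * X$$(l,q))"
          by (simp add: algebra_simps sum_subtractf sum_distrib_left)
        also have "\<dots> = 0" using arg_cong[OF NX, of "\<lambda>A. A$$(p,q)"] mult_entry[OF N X p True] F4[OF True] p True by simp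
        finally show ?thesis using True by simp
      next
        case False
        have "(\<Sum>l<r. (N$$(p,l) - v p * y l) * v l) = (\<Sum>l<r. N$$(p,l) * v l) - v p * (\<Sum>l<r. y l * v l)"
          by (simp add: algebra_simps sum_subtractf sum_distrib_left)
        also have "\<dots> = 0" using F1[OF p] F3 by simp
        finally show ?thesis using False by simp
      qed
      finally show "(N'*X')$$(p,q) = 0\<^sub>m r (Suc k) $$ (p,q)" using p q by simp
    qed (use N' X' in auto)
    moreover have "Y'*N' = 0\<^sub>m (Suc k) r"
    proof (rule eq_matI)
      fix p q assume "p < dim_row (0\<^sub>m (Suc k) r::complex mat)" "q < dim_col (0\<^sub>m (Suc k) r::complex mat)"
      hence p: "p < Suc k" and q: "q < r" by auto
      have "(Y'*N')$$(p,q) = (\<Sum>l<r. (if p < k then Y$$(p,l) else y l) * (N$$(l,q) - v l * y q))"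
        using mult_entry[OF Y' N' p q] p q by (simp add: N'e Y'e)
      also have "\<dots> = 0"
      proof (cases "p < k")
        case True
        have "(\<Sum>l<r. Y$$(p,l) * (N$$(l,q) - v l * y q)) = (\<Sum>l<r. Y$$(p,l) * N$$(l,q)) - (\<Sum>l<r. Y$$(p,l) * v l) * y q"
          by (simp add: algebra_simps sum_subtractf sum_distrib_left)
        also have "\<dots> = 0" using arg_cong[OF YN, of "\<lambda>A. A$$(p,q)"] mult_entry[OF Y N True q] F5[OF True] q True by simp
        finally show ?thesis using True by simp
      next
        case False
        have "(\<Sum>l<r. y l * (N$$(l,q) - v l * y q)) = (\<Sum>l<r. y l * N$$(l,q)) - (\<Sum>l<r. y l * v l) * y q"
          by (simp add: algebra_simps sum_subtractf sum_distrib_left)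
        also have "\<dots> = 0" using F2[OF q] F3 by simp
        finally show ?thesis using False by simp
      qed
      finally show "(Y'*N')$$(p,q) = 0\<^sub>m (Suc k) r $$ (p,q)" using p q by simp
    qed (use Y' N' in auto)
    moreover have "\<forall>p<r. \<forall>q<Suc j. N'$$(p,q) = 0"
    proof (intro allI impI)
      fix p q assume p: "p < r" and q: "q < Suc j"
      hence qr: "q < r" using jr by auto
      show "N'$$(p,q) = 0"
      proof (cases "q < j")
        case True
        thus ?thesis using col0 p ir N'e[OF p qr] by (simp add: y_def)
      next
        case False
        hence "q = j" using q by auto
        thus ?thesis using N'e[OF p qr] c0 by (simp add: y_def v_def c_def)
      qed
    qed
    ultimately show ?thesis using X' Y' N' by blast
  qed
qed

lemma idem_factor:
  fixes M :: "complex mat"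
  assumes M: "M \<in> carrier_mat r r" "M*M = M"
  shows "\<exists>k X Y. X \<in> carrier_mat r k \<and> Y \<in> carrier_mat k r \<and> Y*X = 1\<^sub>m k \<and> M = X*Y"
proof -
  obtain k X Y N where X: "X \<in> carrier_mat r k" and Y: "Y \<in> carrier_mat k r" and "Y*X = 1\<^sub>m k"
    and N: "N \<in> carrier_mat r r" and MXY: "M = X*Y + N" and z: "\<forall>p<r. \<forall>q<r. N$$(p,q) = 0"
    using idem_sweep[OF M, of r] by auto
  have "N = 0\<^sub>m r r" using N z by (auto intro!: eq_matI)
  hence "M = X*Y" using MXY X Y by simp
  thus ?thesis using X Y \<open>Y*X = 1\<^sub>m k\<close> by blast
qed

definition tr :: "complex mat \<Rightarrow> complex" where
  "tr A = (\<Sum>i<dim_row A. A$$(i,i))"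

lemma tr_comm:
  assumes X: "X \<in> carrier_mat a b" and Y: "Y \<in> carrier_mat b a"
  shows "tr (X*Y) = tr (Y*X)"
proof -
  have "tr (X*Y) = (\<Sum>i<a. \<Sum>l<b. X$$(i,l) * Y$$(l,i))"
    unfolding tr_def using X Y by (simp del: index_mult_mat(1) add: mult_entry[OF X Y])
  also have "\<dots> = (\<Sum>l<b. \<Sum>i<a. Y$$(l,i) * X$$(i,l))"
    by (subst sum.swap) (simp add: mult.commute)
  also have "\<dots> = tr (Y*X)"
    unfolding tr_def using X Y by (simp del: index_mult_mat(1) add: mult_entry[OF Y X])
  finally show ?thesis .
qed

lemma tr_one[simp]: "tr (1\<^sub>m k) = of_nat k"
  unfolding tr_def by simp

lemma tr_add: "A \<in> carrier_mat r r \<Longrightarrow> B \<in> carrier_mat r r \<Longrightarrow> tr (A + B) = tr A + tr B"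
  unfolding tr_def by (simp add: sum.distrib)

lemma tr_minus: "A \<in> carrier_mat r r \<Longrightarrow> B \<in> carrier_mat r r \<Longrightarrow> tr (A - B) = tr A - tr B"
  unfolding tr_def by (simp add: sum_subtractf)

lemma tr_zero[simp]: "tr (0\<^sub>m r r) = 0"
  unfolding tr_def by simp

lemma idem_factor_tr:
  fixes M :: "complex mat"
  assumes M: "M \<in> carrier_mat r r" "M*M = M"
  shows "\<exists>k X Y. X \<in> carrier_mat r k \<and> Y \<in> carrier_mat k r \<and> Y*X = 1\<^sub>m k \<and> M = X*Y \<and> tr M = of_nat k"
proof -
  obtain k X Y where X: "X \<in> carrier_mat r k" and Y: "Y \<in> carrier_mat k r" and YX: "Y*X = 1\<^sub>m k" and MXY: "M = X*Y"
    using idem_factor[OF M] by blast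
  have "tr M = of_nat k" using tr_comm[OF X Y] YX MXY by simp
  thus ?thesis using X Y YX MXY by blast
qed

lemma adjr_adjc_one:
  assumes X: "X \<in> carrier_mat r k" and Y: "Y \<in> carrier_mat k r" and YX: "Y*X = 1\<^sub>m k"
    and F5: "\<And>p. p < k \<Longrightarrow> (\<Sum>l<r. Y$$(p,l) * v l) = 0"
    and F4: "\<And>q. q < k \<Longrightarrow> (\<Sum>l<r. y l * X$$(l,q)) = 0"
    and F3: "(\<Sum>l<r. y l * v l) = 1"
  shows "adjr Y y * adjc X v = 1\<^sub>m (Suc k)"
proof (rule eq_matI)
  have X': "adjc X v \<in> carrier_mat r (Suc k)" by (rule adjc_carrier[OF X])
  have Y': "adjr Y y \<in> carrier_mat (Suc k) r" by (rule adjr_carrier[OF Y])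
  fix p q assume p: "p < dim_row (1\<^sub>m (Suc k)::complex mat)" and q: "q < dim_col (1\<^sub>m (Suc k)::complex mat)"
  hence p': "p < Suc k" and q': "q < Suc k" by auto
  have "(adjr Y y * adjc X v)$$(p,q) = (\<Sum>l<r. adjr Y y $$(p,l) * adjc X v $$(l,q))" by (rule mult_entry[OF Y' X' p' q'])
  also have "\<dots> = (\<Sum>l<r. (if p < k then Y$$(p,l) else y l) * (if q < k then X$$(l,q) else v l))"
    using p' q' X Y by (intro sum.cong) (auto simp: adjc_def adjr_def)
  also have "\<dots> = 1\<^sub>m (Suc k) $$ (p,q)"
  proof -
    consider "p < k" "q < k" | "p < k" "q = k" | "p = k" "q < k" | "p = k" "q = k"
      using p' q' by linarith
    thus ?thesis
    proof cases
      case 1 thus ?thesis using arg_cong[OF YX, of "\<lambda>A. A$$(p,q)"] mult_entry[OF Y X, of p q] by simp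
    next
      case 2 thus ?thesis using F5[of p] by simp
    next
      case 3 thus ?thesis using F4[of q] by simp
    next
      case 4 thus ?thesis using F3 by simp
    qed
  qed
  finally show "(adjr Y y * adjc X v)$$(p,q) = 1\<^sub>m (Suc k) $$ (p,q)" .
qed (use X Y in \<open>auto simp: adjc_def adjr_def\<close>)

lemma transpose_adjc: "transpose_mat (adjc X v) = adjr (transpose_mat X) v"
  by (auto simp: adjc_def adjr_def intro!: eq_matI)

lemma sym_idem_factor:
  fixes t :: nat
  shows "\<And>M :: complex mat. M \<in> carrier_mat r r \<Longrightarrow> M*M = M \<Longrightarrow> transpose_mat M = M \<Longrightarrow> tr M = of_nat t \<Longrightarrow>
    \<exists>X. X \<in> carrier_mat r t \<and> transpose_mat X * X = 1\<^sub>m t \<and> X * transpose_mat X = M"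
proof (induction t)
  case 0
  then obtain k X Y where X: "X \<in> carrier_mat r k" and Y: "Y \<in> carrier_mat k r" and MXY: "M = X*Y" and trk: "tr M = of_nat k"
    using idem_factor_tr[of M r] by blast
  have "k = 0" using trk 0 by simp
  hence "M = 0\<^sub>m r r" using MXY X Y by (auto intro!: eq_matI simp: mult_entry[OF X Y])
  thus ?case by (intro exI[of _ "0\<^sub>m r 0"]) (auto intro!: eq_matI)
next
  case (Suc t M)
  have M: "M \<in> carrier_mat r r" and MM: "M*M = M" and Ms: "transpose_mat M = M" using Suc by auto
  have Msym: "M$$(p,q) = M$$(q,p)" if "p < r" "q < r" for p q
    using arg_cong[OF Ms, of "\<lambda>A. A$$(q,p)"] that M by auto
  have MM': "(\<Sum>l<r. M$$(p,l) * M$$(l,q)) = M$$(p,q)" if "p < r" "q < r" for p q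
    using arg_cong[OF MM, of "\<lambda>A. A$$(p,q)"] mult_entry[OF M M that] by simp
  have "tr M \<noteq> 0" using Suc.prems(4) of_nat_eq_0_iff[of "Suc t"] by (metis nat.simps(3))
  hence "M \<noteq> 0\<^sub>m r r" by auto
  then obtain x where xq: "(\<Sum>p<r. x p * (\<Sum>q<r. M$$(p,q) * x q)) \<noteq> 0"
  proof -
    assume hyp: "\<And>x. (\<Sum>p<r. x p * (\<Sum>q<r. M$$(p,q) * x q)) \<noteq> 0 \<Longrightarrow> thesis"
    show thesis
    proof (cases "\<exists>j<r. M$$(j,j) \<noteq> 0")
      case True
      then obtain j where j: "j < r" "M$$(j,j) \<noteq> 0" by auto
      have e: "(\<Sum>b<r. M$$(a,b) * (if b = j then 1 else 0)) = M$$(a,j)" for a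
      proof -
        have "(\<Sum>b<r. M$$(a,b) * (if b = j then 1 else 0)) = (\<Sum>b\<in>{j}. M$$(a,b))"
          using j by (intro sum.mono_neutral_cong_right) auto
        thus ?thesis by simp
      qed
      have "(\<Sum>a<r. (if a = j then 1 else 0) * M$$(a,j)) = (\<Sum>a\<in>{j}. M$$(a,j))"
          using j by (intro sum.mono_neutral_cong_right) auto
      hence "(\<Sum>a<r. (if a = j then 1 else 0) * (\<Sum>b<r. M$$(a,b) * (if b = j then 1 else 0))) = M$$(j,j)"
        by (simp add: e)
      thus thesis using j by (intro hyp[of "\<lambda>p. if p = j then 1 else 0"]) simp
    next
      case False
      obtain p q where pq: "p < r" "q < r" "M$$(p,q) \<noteq> 0"
        using \<open>M \<noteq> 0\<^sub>m r r\<close> M by (metis eq_matI carrier_matD index_zero_mat(1,2,3))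
      have "p \<noteq> q" using False pq by auto
      have "(\<Sum>a<r. (if a = p \<or> a = q then 1 else 0) * (\<Sum>b<r. M$$(a,b) * (if b = p \<or> b = q then 1 else 0)))
          = 2 * M$$(p,q)"
      proof -
        have e: "(\<Sum>b<r. M$$(a,b) * (if b = p \<or> b = q then 1 else 0)) = M$$(a,p) + M$$(a,q)" for a
        proof -
          have "(\<Sum>b<r. M$$(a,b) * (if b = p \<or> b = q then 1 else 0)) = (\<Sum>b\<in>{p,q}. M$$(a,b))"
            using pq by (intro sum.mono_neutral_cong_right) auto
          thus ?thesis using \<open>p \<noteq> q\<close> by simp
        qed
        have "(\<Sum>a<r. (if a = p \<or> a = q then 1 else 0) * (M$$(a,p) + M$$(a,q))) = (\<Sum>a\<in>{p,q}. M$$(a,p) + M$$(a,q))"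
          using pq by (intro sum.mono_neutral_cong_right) auto
        also have "\<dots> = 2 * M$$(p,q)" using \<open>p \<noteq> q\<close> False pq Msym[of p q] by simp
        finally show ?thesis by (simp add: e)
      qed
      thus thesis using pq by (intro hyp[of "\<lambda>a. if a = p \<or> a = q then 1 else 0"]) simp
    qed
  qed
  define Mx where "Mx = (\<lambda>l. \<Sum>q<r. M$$(l,q) * x q)"
  define qd where "qd = (\<Sum>p<r. x p * Mx p)"
  have qd0: "qd \<noteq> 0" using xq by (simp add: qd_def Mx_def)
  define s where "s = csqrt qd"
  have s2: "s * s = qd" by (simp add: s_def power2_eq_square[symmetric])
  have s0: "s \<noteq> 0" using s2 qd0 by auto
  define w where "w = (\<lambda>l. Mx l / s)"
  have Ma: "(\<Sum>l<r. M$$(p,l) * Mx l) = Mx p" if p: "p < r" for p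
  proof -
    have "(\<Sum>l<r. M$$(p,l) * Mx l) = (\<Sum>q<r. (\<Sum>l<r. M$$(p,l) * M$$(l,q)) * x q)"
      unfolding Mx_def by (simp add: sum_distrib_left sum_distrib_right mult.assoc) (rule sum.swap)
    also have "\<dots> = Mx p" unfolding Mx_def using MM'[OF p] by simp
    finally show ?thesis .
  qed
  have Mb: "(\<Sum>l<r. Mx l * Mx l) = qd"
  proof -
    have "(\<Sum>l<r. Mx l * Mx l) = (\<Sum>l<r. \<Sum>q<r. x q * (M$$(q,l) * Mx l))"
      unfolding Mx_def by (intro sum.cong refl) (auto simp: sum_distrib_right Msym mult_ac)
    also have "\<dots> = (\<Sum>q<r. x q * (\<Sum>l<r. M$$(q,l) * Mx l))"
      by (subst sum.swap) (simp add: sum_distrib_left)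
    also have "\<dots> = qd" unfolding qd_def by (simp add: Ma)
    finally show ?thesis .
  qed
  have F1: "(\<Sum>l<r. M$$(p,l) * w l) = w p" if "p < r" for p
    using Ma[OF that] unfolding w_def by (simp add: sum_divide_distrib[symmetric])
  have F2: "(\<Sum>l<r. w l * M$$(l,q)) = w q" if "q < r" for q
  proof -
    have "(\<Sum>l<r. w l * M$$(l,q)) = (\<Sum>l<r. M$$(q,l) * w l)"
      using that by (intro sum.cong) (auto simp: Msym mult.commute)
    thus ?thesis using F1[OF that] by simp
  qed
  have F3: "(\<Sum>l<r. w l * w l) = 1"
  proof -
    have "(\<Sum>l<r. w l * w l) = (\<Sum>l<r. Mx l * Mx l) / (s * s)"
      unfolding w_def by (simp add: sum_divide_distrib)
    thus ?thesis using Mb s2 qd0 by simp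
  qed
  define M' where "M' = M - outer r w w"
  have M': "M' \<in> carrier_mat r r" using M by (simp add: M'_def minus_carrier_mat)
  have M'e: "M'$$(p,q) = M$$(p,q) - w p * w q" if "p < r" "q < r" for p q
    using that M by (simp add: M'_def)
  have M'M': "M'*M' = M'"
  proof (rule eq_matI)
    fix p q assume "p < dim_row M'" "q < dim_col M'"
    hence p: "p < r" and q: "q < r" using M' by auto
    have "(M'*M')$$(p,q) = (\<Sum>l<r. (M$$(p,l) - w p * w l) * (M$$(l,q) - w l * w q))"
      using mult_entry[OF M' M' p q] p q by (simp add: M'e)
    also have "\<dots> = (\<Sum>l<r. M$$(p,l) * M$$(l,q)) - w p * (\<Sum>l<r. w l * M$$(l,q))
           - (\<Sum>l<r. M$$(p,l) * w l) * w q + w p * (\<Sum>l<r. w l * w l) * w q"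
      by (simp add: algebra_simps sum_subtractf sum.distrib sum_distrib_left sum_distrib_right)
    also have "\<dots> = M$$(p,q) - w p * w q"
      using MM'[OF p q] F1[OF p] F2[OF q] F3 by simp
    finally show "(M'*M')$$(p,q) = M'$$(p,q)" using M'e[OF p q] by simp
  qed (use M' in auto)
  have M's: "transpose_mat M' = M'"
    using M' by (auto intro!: eq_matI simp: M'e Msym mult.commute)
  have "tr M' = tr M - (\<Sum>l<r. w l * w l)"
    unfolding M'_def using M by (subst tr_minus[of _ r]) (auto simp: tr_def)
  hence trM': "tr M' = of_nat t" using F3 Suc.prems by simp
  obtain X' where X': "X' \<in> carrier_mat r t" and X'X': "transpose_mat X' * X' = 1\<^sub>m t"
     and X'M': "X' * transpose_mat X' = M'"
    using Suc.IH[OF M' M'M' M's trM'] by blast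
  have M'w: "(\<Sum>l<r. M'$$(p,l) * w l) = 0" if "p < r" for p
  proof -
    have "(\<Sum>l<r. M'$$(p,l) * w l) = (\<Sum>l<r. M$$(p,l) * w l) - w p * (\<Sum>l<r. w l * w l)"
      using that by (simp add: M'e algebra_simps sum_subtractf sum_distrib_left)
    thus ?thesis using F1[OF that] F3 by simp
  qed
  have M'X': "M' * X' = X'"
  proof -
    have "M' * X' = X' * (transpose_mat X' * X')"
      unfolding X'M'[symmetric] using X' by (subst assoc_mult_mat[of _ r t _ r _ t]) auto
    thus ?thesis using X'X' X' by simp
  qed
  have F5: "(\<Sum>l<r. transpose_mat X' $$(p,l) * w l) = 0" if p: "p < t" for p
  proof -
    have "(\<Sum>l<r. transpose_mat X' $$(p,l) * w l) = (\<Sum>l<r. X'$$(l,p) * w l)"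
      using X' p by (intro sum.cong) auto
    also have "\<dots> = (\<Sum>l<r. (\<Sum>m<r. M'$$(l,m) * X'$$(m,p)) * w l)"
      using arg_cong[OF M'X', of "\<lambda>A. A$$(l,p)" for l] mult_entry[OF M' X' _ p] p
      by (intro sum.cong refl) (metis (no_types, lifting) lessThan_iff)
    also have "\<dots> = (\<Sum>m<r. X'$$(m,p) * (\<Sum>l<r. M'$$(m,l) * w l))"
      apply (simp add: sum_distrib_right sum_distrib_left)
      apply (subst sum.swap)
      apply (intro sum.cong refl)
      using arg_cong[OF M's, of "\<lambda>A. A$$(l,m)" for l m] M'
      by (metis (no_types, lifting) carrier_matD(1,2) index_transpose_mat(1) lessThan_iff mult.commute mult.left_commute)
    also have "\<dots> = 0" by (simp add: M'w)
    finally show ?thesis .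
  qed
  have F4: "(\<Sum>l<r. w l * X'$$(l,q)) = 0" if "q < t" for q
    using F5[OF that] X' that by (simp add: mult.commute)
  define X where "X = adjc X' w"
  have X: "X \<in> carrier_mat r (Suc t)" unfolding X_def by (rule adjc_carrier[OF X'])
  have "transpose_mat X * X = 1\<^sub>m (Suc t)"
    unfolding X_def transpose_adjc
    by (rule adjr_adjc_one[OF X' _ X'X' F5 F4 F3]) (use X' in simp)
  moreover have "X * transpose_mat X = M"
  proof -
    have "X * transpose_mat X = X' * transpose_mat X' + outer r w w"
      unfolding X_def transpose_adjc by (rule adjc_adjr[OF X']) (use X' in simp)
    thus ?thesis unfolding X'M' M'_def using M by (auto intro!: eq_matI)
  qed
  ultimately show ?case using X by blast
qed

lemma sum_lessThan_add: fixes m p :: nat shows "(\<Sum>l<m + p. f l) = (\<Sum>l<m. f l) + (\<Sum>l<p. f (m + l))"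
  by (induction p) (auto simp: add.assoc)

lemma sum_blocks: fixes k n :: nat shows "(\<Sum>l<k*n. f l) = (\<Sum>s<k. \<Sum>a<n. f (s*n + a))"
proof (induction k)
  case (Suc k)
  have "(\<Sum>l<Suc k * n. f l) = (\<Sum>l<k*n + n. f l)" by (simp add: add.commute)
  also have "\<dots> = (\<Sum>l<k*n. f l) + (\<Sum>a<n. f (k*n + a))" by (rule sum_lessThan_add)
  finally show ?case using Suc by simp
qed simp

lemma sum_split_r: fixes k n m r :: nat shows "k*n + m = r \<Longrightarrow> (\<Sum>l<r. f l) = (\<Sum>s<k. \<Sum>a<n. f (s*n + a)) + (\<Sum>l<m. f (k*n + l))"
  using sum_lessThan_add[of f "k*n" m] sum_blocks[of f k n] by auto

definition msum :: "nat \<Rightarrow> 'i set \<Rightarrow> ('i \<Rightarrow> complex mat) \<Rightarrow> complex mat" where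
  "msum r I f = mat r r (\<lambda>(i,j). \<Sum>a\<in>I. f a $$ (i,j))"

lemma msum_cong: "(\<And>a. a \<in> I \<Longrightarrow> f a = g a) \<Longrightarrow> msum r I f = msum r I g"
  unfolding msum_def by (auto intro!: eq_matI sum.cong)

lemma msum_carrier[simp]: "msum r I f \<in> carrier_mat r r"
  by (simp add: msum_def)
lemma msum_dim[simp]: "dim_row (msum r I f) = r" "dim_col (msum r I f) = r"
  by (simp_all add: msum_def)
lemma msum_index[simp]: "i < r \<Longrightarrow> j < r \<Longrightarrow> msum r I f $$ (i,j) = (\<Sum>a\<in>I. f a $$ (i,j))"
  by (simp add: msum_def)

lemma msum_mult_left:
  assumes A: "A \<in> carrier_mat r r" and f: "\<And>a. a \<in> I \<Longrightarrow> f a \<in> carrier_mat r r"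
  shows "A * msum r I f = msum r I (\<lambda>a. A * f a)"
proof (rule eq_matI)
  fix i j assume "i < dim_row (msum r I (\<lambda>a. A * f a))" "j < dim_col (msum r I (\<lambda>a. A * f a))"
  hence ij: "i < r" "j < r" by auto
  have "(A * msum r I f)$$(i,j) = (\<Sum>l<r. A$$(i,l) * (\<Sum>a\<in>I. f a $$ (l,j)))"
    using mult_entry[OF A msum_carrier ij] ij by simp
  also have "\<dots> = (\<Sum>a\<in>I. \<Sum>l<r. A$$(i,l) * f a $$ (l,j))"
    by (simp add: sum_distrib_left) (rule sum.swap)
  also have "\<dots> = msum r I (\<lambda>a. A * f a) $$ (i,j)"
    using ij f by (auto intro!: sum.cong simp: mult_entry[OF A f])
  finally show "(A * msum r I f)$$(i,j) = msum r I (\<lambda>a. A * f a) $$ (i,j)" .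
qed (use A in auto)

lemma msum_mult_right:
  assumes A: "A \<in> carrier_mat r r" and f: "\<And>a. a \<in> I \<Longrightarrow> f a \<in> carrier_mat r r"
  shows "msum r I f * A = msum r I (\<lambda>a. f a * A)"
proof (rule eq_matI)
  fix i j assume "i < dim_row (msum r I (\<lambda>a. f a * A))" "j < dim_col (msum r I (\<lambda>a. f a * A))"
  hence ij: "i < r" "j < r" by auto
  have "(msum r I f * A)$$(i,j) = (\<Sum>l<r. (\<Sum>a\<in>I. f a $$ (i,l)) * A$$(l,j))"
    using mult_entry[OF msum_carrier A ij] ij by simp
  also have "\<dots> = (\<Sum>a\<in>I. \<Sum>l<r. f a $$ (i,l) * A$$(l,j))"
    by (simp add: sum_distrib_right) (rule sum.swap)
  also have "\<dots> = msum r I (\<lambda>a. f a * A) $$ (i,j)"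
    using ij f by (auto intro!: sum.cong simp: mult_entry[OF f A])
  finally show "(msum r I f * A)$$(i,j) = msum r I (\<lambda>a. f a * A) $$ (i,j)" .
qed (use A in auto)

lemma msum_delta:
  assumes "finite I" "b \<in> I" "M \<in> carrier_mat r r"
  shows "msum r I (\<lambda>c. if b = c then M else 0\<^sub>m r r) = M"
proof (rule eq_matI)
  fix i j assume "i < dim_row M" "j < dim_col M"
  hence ij: "i < r" "j < r" using assms by auto
  have "(\<Sum>a\<in>I. (if b = a then M else 0\<^sub>m r r) $$ (i,j)) = (\<Sum>a\<in>I. if b = a then M $$ (i,j) else 0)"
    using ij by (intro sum.cong) auto
  also have "\<dots> = M$$(i,j)" using assms by simp
  finally show "msum r I (\<lambda>c. if b = c then M else 0\<^sub>m r r) $$ (i,j) = M$$(i,j)" using ij by simp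
qed (use assms in auto)

lemma tr_msum: "(\<And>a. a \<in> I \<Longrightarrow> f a \<in> carrier_mat r r) \<Longrightarrow> tr (msum r I f) = (\<Sum>a\<in>I. tr (f a))"
  unfolding tr_def by (simp add: sum.swap[of _ I]) (intro sum.cong, auto)

locale musys =
  fixes n r :: nat and T :: "nat \<Rightarrow> nat \<Rightarrow> complex mat"
  assumes n0: "0 < n"
    and Tc: "\<And>a b. a < n \<Longrightarrow> b < n \<Longrightarrow> T a b \<in> carrier_mat r r"
    and Tm: "\<And>a b c d. a < n \<Longrightarrow> b < n \<Longrightarrow> c < n \<Longrightarrow> d < n \<Longrightarrow>
               T a b * T c d = (if b = c then T a d else 0\<^sub>m r r)"
begin

definition P where "P = msum r {..<n} (\<lambda>a. T a a)"

lemma P: "P \<in> carrier_mat r r" by (simp add: P_def)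

lemma TP: assumes ab: "a < n" "b < n" shows "T a b * P = T a b"
proof -
  have "T a b * P = msum r {..<n} (\<lambda>c. T a b * T c c)"
    unfolding P_def by (rule msum_mult_left[OF Tc[OF ab]]) (auto intro: Tc)
  also have "\<dots> = msum r {..<n} (\<lambda>c. if b = c then T a b else 0\<^sub>m r r)"
    using ab by (intro msum_cong) (simp add: Tm)
  also have "\<dots> = T a b" using ab by (intro msum_delta) (auto intro: Tc)
  finally show ?thesis .
qed

lemma PT: assumes ab: "a < n" "b < n" shows "P * T a b = T a b"
proof -
  have "P * T a b = msum r {..<n} (\<lambda>c. T c c * T a b)"
    unfolding P_def by (rule msum_mult_right[OF Tc[OF ab]]) (auto intro: Tc)
  also have "\<dots> = msum r {..<n} (\<lambda>c. if a = c then T a b else 0\<^sub>m r r)"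
    using ab by (intro msum_cong) (auto simp: Tm)
  also have "\<dots> = T a b" using ab by (intro msum_delta) (auto intro: Tc)
  finally show ?thesis .
qed

lemma PP: "P * P = P"
proof -
  have "P * P = msum r {..<n} (\<lambda>c. P * T c c)"
    by (subst (2) P_def) (rule msum_mult_left[OF P], auto intro: Tc)
  also have "\<dots> = msum r {..<n} (\<lambda>c. T c c)" by (intro msum_cong) (simp add: PT)
  finally show ?thesis unfolding P_def .
qed

definition Q where "Q = 1\<^sub>m r - P"

lemma Q: "Q \<in> carrier_mat r r" by (simp add: Q_def P minus_carrier_mat)

lemma QQ: "Q * Q = Q"
proof -
  have "Q * Q = Q * 1\<^sub>m r - Q * P" by (subst (2) Q_def) (rule mult_minus_distrib_mat[OF Q _ P], simp)
  moreover have "Q * P = 0\<^sub>m r r"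
    unfolding Q_def using P by (subst minus_mult_distrib_mat[of _ r r _ _ r]) (auto simp: PP left_mult_one_mat)
  ultimately show ?thesis using Q by (auto intro!: eq_matI)
qed

lemma TQ: assumes "a < n" "b < n" shows "T a b * Q = 0\<^sub>m r r"
proof -
  have "T a b * Q = T a b * 1\<^sub>m r - T a b * P" unfolding Q_def
    by (rule mult_minus_distrib_mat[OF Tc[OF assms] _ P]) simp
  thus ?thesis using Tc[OF assms] TP[OF assms] by simp
qed

lemma QT: assumes "a < n" "b < n" shows "Q * T a b = 0\<^sub>m r r"
proof -
  have "Q * T a b = 1\<^sub>m r * T a b - P * T a b" unfolding Q_def
    by (rule minus_mult_distrib_mat[OF _ P Tc[OF assms]]) simp
  thus ?thesis using Tc[OF assms] PT[OF assms] by simp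
qed

lemma trP: "tr (T 0 0) = of_nat k \<Longrightarrow> tr P = of_nat (n * k)"
proof -
  assume k: "tr (T 0 0) = of_nat k"
  have "tr P = (\<Sum>a<n. tr (T a a))" unfolding P_def by (rule tr_msum) (auto intro: Tc)
  also have "\<dots> = (\<Sum>a<n. tr (T 0 0))"
  proof (intro sum.cong refl)
    fix a assume "a \<in> {..<n}"
    hence a: "a < n" by simp
    have "tr (T a a) = tr (T a 0 * T 0 a)" using Tm[OF a n0 n0 a] by simp
    also have "\<dots> = tr (T 0 a * T a 0)" by (rule tr_comm[OF Tc Tc]) (use a n0 in auto)
    also have "\<dots> = tr (T 0 0)" using Tm[OF n0 a a n0] by simp
    finally show "tr (T a a) = tr (T 0 0)" .
  qed
  finally show ?thesis using k by simp
qed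

definition Sinv where "Sinv k X U = mat r r (\<lambda>(i,l). if l < k*n then (T (l mod n) 0 * X)$$(i, l div n) else U$$(i, l - k*n))"
definition S where "S k Y V = mat r r (\<lambda>(l,j). if l < k*n then (Y * T 0 (l mod n))$$(l div n, j) else V$$(l - k*n, j))"
definition Psi where "Psi A = mat r r (\<lambda>(i,j). \<Sum>a<n. \<Sum>b<n. A$$(a,b) * T a b $$ (i,j))"

lemma divmod_facts:
  assumes "l < k*n"
  shows "l div n < k" "l mod n < n"
  using assms n0 by (auto simp: less_mult_imp_div_less)

end

locale musys_fac = musys +
  fixes k m :: nat and X Y U V :: "complex mat"
  assumes X: "X \<in> carrier_mat r k" and Y: "Y \<in> carrier_mat k r" and YX: "Y*X = 1\<^sub>m k"
    and XY: "X*Y = T 0 0" and U: "U \<in> carrier_mat r m" and V: "V \<in> carrier_mat m r"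
    and VU: "V*U = 1\<^sub>m m" and UV: "U*V = Q" and rkm: "k*n + m = r"
begin

lemma TX: "a < n \<Longrightarrow> T a 0 * X \<in> carrier_mat r k" using Tc[of a 0] n0 X by auto
lemma YT: "a < n \<Longrightarrow> Y * T 0 a \<in> carrier_mat k r" using Tc[of 0 a] n0 Y by auto

lemma TXYT: assumes a: "a < n" and b: "b < n" shows "(T a 0 * X) * (Y * T 0 b) = T a b"
proof -
  have "(T a 0 * X) * (Y * T 0 b) = T a 0 * (X * (Y * T 0 b))"
    using Tc[OF a n0] Tc[OF n0 b] X Y by (subst assoc_mult_mat[of _ r r _ k _ r]) auto
  also have "\<dots> = T a 0 * ((X * Y) * T 0 b)"
    using Tc[OF a n0] Tc[OF n0 b] X Y by (subst assoc_mult_mat[of _ r k _ r _ r]) auto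
  also have "\<dots> = T a b" unfolding XY using Tm a b n0 by simp
  finally show ?thesis .
qed

lemma YTTX: assumes a: "a < n" and b: "b < n"
  shows "(Y * T 0 a) * (T b 0 * X) = (if a = b then 1\<^sub>m k else 0\<^sub>m k k)"
proof -
  have "(Y * T 0 a) * (T b 0 * X) = Y * (T 0 a * (T b 0 * X))"
    using Tc[OF n0 a] Tc[OF b n0] X Y by (subst assoc_mult_mat[of _ k r _ r _ k]) auto
  also have "\<dots> = Y * ((T 0 a * T b 0) * X)"
    using Tc[OF n0 a] Tc[OF b n0] X by (subst assoc_mult_mat[of _ r r _ r _ k]) auto
  also have "\<dots> = (if a = b then 1\<^sub>m k else 0\<^sub>m k k)"
  proof (cases "a = b")
    case True
    have "Y * ((X*Y) * X) = Y * (X * (Y * X))"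
      using X Y by (subst assoc_mult_mat[of X r k Y r X k]) auto
    also have "\<dots> = (Y * X) * (Y * X)"
      using X Y by (subst assoc_mult_mat[of Y k r X k "Y*X" k]) auto
    finally have "Y * ((X*Y) * X) = (Y * X) * (Y * X)" .
    thus ?thesis using True Tm[OF n0 a b n0] YX XY by simp
  next
    case False
    thus ?thesis using Tm[OF n0 a b n0] X Y by simp
  qed
  finally show ?thesis .
qed

lemma YTU: assumes a: "a < n" shows "(Y * T 0 a) * U = 0\<^sub>m k m"
proof -
  have "U = Q * U" using U V by (simp add: UV[symmetric] assoc_mult_mat[of _ r m _ r _ m] VU)
  hence "(Y * T 0 a) * U = Y * ((T 0 a * Q) * U)"
    using Tc[OF n0 a] Y U Q by (simp add: assoc_mult_mat[of _ k r _ r _ m] assoc_mult_mat[of _ r r _ r _ m])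
  thus ?thesis using TQ[OF n0 a] Y U by simp
qed

lemma VTX: assumes a: "a < n" shows "V * (T a 0 * X) = 0\<^sub>m m k"
proof -
  have "V = V * Q" using U V by (simp add: UV[symmetric] assoc_mult_mat[of _ m r _ m _ r, symmetric] VU)
  hence "V * (T a 0 * X) = (V * Q) * (T a 0 * X)" by simp
  also have "\<dots> = V * ((Q * T a 0) * X)"
    using Tc[OF a n0] V X Q by (simp add: assoc_mult_mat[of _ m r _ r _ k] assoc_mult_mat[of _ r r _ r _ k])
  finally have "V * (T a 0 * X) = V * ((Q * T a 0) * X)" .
  thus ?thesis using QT[OF a n0] V X by simp
qed

end

lemma divmod_blk: fixes n :: nat assumes "a < n" shows "(s*n+a) div n = s" "(s*n+a) mod n = a"
  using assms by auto

lemma be_entry: "l < r \<Longrightarrow> l' < r \<Longrightarrow> block_embed r k n A $$ (l,l') =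
   (if l < k*n \<and> l' < k*n \<and> l div n = l' div n then A$$(l mod n, l' mod n) else 0)"
  by (simp add: block_embed_def)

lemma be_carrier[simp]: "block_embed r k n A \<in> carrier_mat r r"
  by (simp add: block_embed_def)

context musys_fac
begin

lemma Si: "Sinv k X U \<in> carrier_mat r r" by (simp add: Sinv_def)
lemma So: "S k Y V \<in> carrier_mat r r" by (simp add: S_def)

lemma Si_e: "i < r \<Longrightarrow> l < r \<Longrightarrow> Sinv k X U $$ (i,l) =
   (if l < k*n then (T (l mod n) 0 * X)$$(i, l div n) else U$$(i, l - k*n))"
  by (simp add: Sinv_def)
lemma So_e: "l < r \<Longrightarrow> j < r \<Longrightarrow> S k Y V $$ (l,j) =
   (if l < k*n then (Y * T 0 (l mod n))$$(l div n, j) else V$$(l - k*n, j))"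
  by (simp add: S_def)

lemma S_Sinv: "S k Y V * Sinv k X U = 1\<^sub>m r"
proof (rule eq_matI)
  fix l l' assume "l < dim_row (1\<^sub>m r :: complex mat)" "l' < dim_col (1\<^sub>m r :: complex mat)"
  hence l: "l < r" and l': "l' < r" by auto
  have e: "(S k Y V * Sinv k X U) $$ (l,l') = (\<Sum>i<r. S k Y V $$ (l,i) * Sinv k X U $$ (i,l'))"
    by (rule mult_entry[OF So Si l l'])
  show "(S k Y V * Sinv k X U) $$ (l,l') = 1\<^sub>m r $$ (l,l')"
  proof (cases "l < k*n")
    case True
    note lk = divmod_facts[OF True]
    show ?thesis
    proof (cases "l' < k*n")
      case True
      note lk' = divmod_facts[OF True]
      have "(\<Sum>i<r. S k Y V $$ (l,i) * Sinv k X U $$ (i,l')) =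
         (\<Sum>i<r. (Y * T 0 (l mod n))$$(l div n, i) * (T (l' mod n) 0 * X)$$(i, l' div n))"
        using l l' \<open>l < k*n\<close> True by (intro sum.cong) (auto simp: Si_e So_e)
      also have "\<dots> = ((Y * T 0 (l mod n)) * (T (l' mod n) 0 * X)) $$ (l div n, l' div n)"
        by (rule mult_entry[OF YT TX, symmetric]) (use lk lk' in auto)
      also have "\<dots> = (if l = l' then 1 else 0)"
      proof -
        have "l = l' \<longleftrightarrow> l mod n = l' mod n \<and> l div n = l' div n"
          by (metis div_mult_mod_eq)
        thus ?thesis using lk lk' by (simp add: YTTX)
      qed
      finally show ?thesis using e l l' by simp
    next
      case False
      have "(\<Sum>i<r. S k Y V $$ (l,i) * Sinv k X U $$ (i,l')) =
         (\<Sum>i<r. (Y * T 0 (l mod n))$$(l div n, i) * U$$(i, l' - k*n))"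
        using l l' \<open>l < k*n\<close> False by (intro sum.cong) (auto simp: Si_e So_e)
      also have "\<dots> = ((Y * T 0 (l mod n)) * U) $$ (l div n, l' - k*n)"
        by (rule mult_entry[OF YT U, symmetric]) (use lk l' rkm False in auto)
      also have "\<dots> = 0" using YTU[OF lk(2)] lk l' rkm False by auto
      finally show ?thesis using e l l' \<open>l < k*n\<close> False by auto
    qed
  next
    case False
    show ?thesis
    proof (cases "l' < k*n")
      case True
      note lk' = divmod_facts[OF True]
      have "(\<Sum>i<r. S k Y V $$ (l,i) * Sinv k X U $$ (i,l')) =
         (\<Sum>i<r. V$$(l - k*n, i) * (T (l' mod n) 0 * X)$$(i, l' div n))"
        using l l' \<open>\<not> l < k*n\<close> True by (intro sum.cong) (auto simp: Si_e So_e)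
      also have "\<dots> = (V * (T (l' mod n) 0 * X)) $$ (l - k*n, l' div n)"
        by (rule mult_entry[OF V TX, symmetric]) (use lk' l rkm False in auto)
      also have "\<dots> = 0" using VTX[OF lk'(2)] lk' l rkm False by auto
      finally show ?thesis using e l l' \<open>l' < k*n\<close> False by auto
    next
      case False
      have "(\<Sum>i<r. S k Y V $$ (l,i) * Sinv k X U $$ (i,l')) =
         (\<Sum>i<r. V$$(l - k*n, i) * U$$(i, l' - k*n))"
        using l l' \<open>\<not> l < k*n\<close> False by (intro sum.cong) (auto simp: Si_e So_e)
      also have "\<dots> = (V * U) $$ (l - k*n, l' - k*n)"
        by (rule mult_entry[OF V U, symmetric]) (use l l' rkm False \<open>\<not> l < k*n\<close> in auto)
      also have "\<dots> = (if l = l' then 1 else 0)"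
        using VU l l' rkm False \<open>\<not> l < k*n\<close> by auto
      finally show ?thesis using e l l' by auto
    qed
  qed
qed (auto simp: S_def Sinv_def)

lemma Sinv_S: "Sinv k X U * S k Y V = 1\<^sub>m r"
proof (rule eq_matI)
  fix i j assume "i < dim_row (1\<^sub>m r :: complex mat)" "j < dim_col (1\<^sub>m r :: complex mat)"
  hence i: "i < r" and j: "j < r" by auto
  have "(Sinv k X U * S k Y V) $$ (i,j) = (\<Sum>l<r. Sinv k X U $$ (i,l) * S k Y V $$ (l,j))"
    by (rule mult_entry[OF Si So i j])
  also have "\<dots> = (\<Sum>s<k. \<Sum>a<n. Sinv k X U $$ (i,s*n+a) * S k Y V $$ (s*n+a,j))
       + (\<Sum>l<m. Sinv k X U $$ (i,k*n+l) * S k Y V $$ (k*n+l,j))"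
    by (rule sum_split_r[OF rkm])
  also have "(\<Sum>s<k. \<Sum>a<n. Sinv k X U $$ (i,s*n+a) * S k Y V $$ (s*n+a,j))
       = (\<Sum>s<k. \<Sum>a<n. (T a 0 * X)$$(i,s) * (Y * T 0 a)$$(s,j))"
  proof (intro sum.cong refl)
    fix s a assume s: "s \<in> {..<k}" and a: "a \<in> {..<n}"
    have lt: "s*n+a < k*n"
    proof -
      have "s*n + a < s*n + n" using a by simp
      also have "\<dots> = Suc s * n" by simp
      also have "\<dots> \<le> k*n" using s by (intro mult_le_mono1) simp
      finally show ?thesis .
    qed
    show "Sinv k X U $$ (i,s*n+a) * S k Y V $$ (s*n+a,j) = (T a 0 * X)$$(i,s) * (Y * T 0 a)$$(s,j)"
      using lt rkm i j a by (simp add: Si_e So_e divmod_blk)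
  qed
  also have "\<dots> = (\<Sum>a<n. ((T a 0 * X) * (Y * T 0 a))$$(i,j))"
    by (subst sum.swap) (intro sum.cong refl, rule mult_entry[OF TX YT i j, symmetric], auto)
  also have "\<dots> = P $$ (i,j)" using i j by (simp add: TXYT P_def)
  also have "(\<Sum>l<m. Sinv k X U $$ (i,k*n+l) * S k Y V $$ (k*n+l,j)) = (\<Sum>l<m. U$$(i,l) * V$$(l,j))"
    using i j rkm by (intro sum.cong refl) (simp add: Si_e So_e)
  also have "\<dots> = Q $$ (i,j)" using mult_entry[OF U V i j] UV by simp
  finally show "(Sinv k X U * S k Y V) $$ (i,j) = 1\<^sub>m r $$ (i,j)"
    using i j P by (simp add: Q_def)
qed (auto simp: S_def Sinv_def)

lemma main_eq:
  assumes A: "A \<in> carrier_mat n n"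
  shows "Sinv k X U * block_embed r k n A * S k Y V = Psi A"
proof -
  define B where "B = block_embed r k n A"
  have B: "B \<in> carrier_mat r r" by (simp add: B_def)
  have SB: "(Sinv k X U * B) $$ (i,l') = (if l' < k*n then (\<Sum>a<n. (T a 0 * X)$$(i, l' div n) * A$$(a, l' mod n)) else 0)"
    if i: "i < r" and l': "l' < r" for i l'
  proof -
    have "(Sinv k X U * B) $$ (i,l') = (\<Sum>l<r. Sinv k X U $$ (i,l) * B $$ (l,l'))"
      by (rule mult_entry[OF Si B i l'])
    also have "\<dots> = (\<Sum>s<k. \<Sum>a<n. Sinv k X U $$ (i,s*n+a) * B $$ (s*n+a,l'))
       + (\<Sum>l<m. Sinv k X U $$ (i,k*n+l) * B $$ (k*n+l,l'))"
      by (rule sum_split_r[OF rkm])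
    also have "(\<Sum>l<m. Sinv k X U $$ (i,k*n+l) * B $$ (k*n+l,l')) = 0"
      using rkm l' by (intro sum.neutral) (auto simp: B_def be_entry)
    also have "(\<Sum>s<k. \<Sum>a<n. Sinv k X U $$ (i,s*n+a) * B $$ (s*n+a,l'))
       = (\<Sum>s<k. \<Sum>a<n. if l' < k*n \<and> s = l' div n then (T a 0 * X)$$(i,s) * A$$(a, l' mod n) else 0)"
    proof (intro sum.cong refl)
      fix s a assume s: "s \<in> {..<k}" and a: "a \<in> {..<n}"
      have lt: "s*n+a < k*n"
      proof -
        have "s*n + a < s*n + n" using a by simp
        also have "\<dots> = Suc s * n" by simp
        also have "\<dots> \<le> k*n" using s by (intro mult_le_mono1) simp
        finally show ?thesis .
      qed
      show "Sinv k X U $$ (i,s*n+a) * B $$ (s*n+a,l') = (if l' < k*n \<and> s = l' div n then (T a 0 * X)$$(i,s) * A$$(a, l' mod n) else 0)"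
        using lt rkm i l' a by (auto simp: Si_e B_def be_entry divmod_blk)
    qed
    also have "\<dots> = (if l' < k*n then (\<Sum>a<n. (T a 0 * X)$$(i, l' div n) * A$$(a, l' mod n)) else 0)"
    proof (cases "l' < k*n")
      case True
      have "(\<Sum>s<k. \<Sum>a<n. if l' < k*n \<and> s = l' div n then (T a 0 * X)$$(i,s) * A$$(a, l' mod n) else 0)
          = (\<Sum>s<k. if s = l' div n then (\<Sum>a<n. (T a 0 * X)$$(i,s) * A$$(a, l' mod n)) else 0)"
        using True by (intro sum.cong refl) auto
      also have "\<dots> = (\<Sum>a<n. (T a 0 * X)$$(i, l' div n) * A$$(a, l' mod n))"
        using divmod_facts[OF True] by (simp add: sum.delta')
      finally show ?thesis using True by simp
    qed simp
    finally show ?thesis by simp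
  qed
  show ?thesis
  proof (rule eq_matI)
    fix i j assume "i < dim_row (Psi A)" "j < dim_col (Psi A)"
    hence i: "i < r" and j: "j < r" by (auto simp: Psi_def)
    have SBc: "Sinv k X U * B \<in> carrier_mat r r" using Si B by simp
    have "(Sinv k X U * B * S k Y V) $$ (i,j) = (\<Sum>l<r. (Sinv k X U * B) $$ (i,l) * S k Y V $$ (l,j))"
      by (rule mult_entry[OF SBc So i j])
    also have "\<dots> = (\<Sum>s<k. \<Sum>b<n. (Sinv k X U * B) $$ (i,s*n+b) * S k Y V $$ (s*n+b,j))
       + (\<Sum>l<m. (Sinv k X U * B) $$ (i,k*n+l) * S k Y V $$ (k*n+l,j))"
      by (rule sum_split_r[OF rkm])
    also have "(\<Sum>l<m. (Sinv k X U * B) $$ (i,k*n+l) * S k Y V $$ (k*n+l,j)) = 0"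
      using rkm i by (intro sum.neutral) (auto simp: SB)
    also have "(\<Sum>s<k. \<Sum>b<n. (Sinv k X U * B) $$ (i,s*n+b) * S k Y V $$ (s*n+b,j))
       = (\<Sum>s<k. \<Sum>b<n. (\<Sum>a<n. (T a 0 * X)$$(i, s) * A$$(a, b)) * (Y * T 0 b)$$(s,j))"
    proof (intro sum.cong refl)
      fix s b assume s: "s \<in> {..<k}" and b: "b \<in> {..<n}"
      have lt: "s*n+b < k*n"
      proof -
        have "s*n + b < s*n + n" using b by simp
        also have "\<dots> = Suc s * n" by simp
        also have "\<dots> \<le> k*n" using s by (intro mult_le_mono1) simp
        finally show ?thesis .
      qed
      show "(Sinv k X U * B) $$ (i,s*n+b) * S k Y V $$ (s*n+b,j) = (\<Sum>a<n. (T a 0 * X)$$(i, s) * A$$(a, b)) * (Y * T 0 b)$$(s,j)"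
        using lt rkm i j b by (simp add: SB So_e divmod_blk)
    qed
    also have "\<dots> = (\<Sum>a<n. \<Sum>b<n. A$$(a,b) * (\<Sum>s<k. (T a 0 * X)$$(i, s) * (Y * T 0 b)$$(s,j)))"
    proof -
      define t where "t = (\<lambda>a b s. A$$(a,b) * ((T a 0 * X)$$(i, s) * (Y * T 0 b)$$(s,j)))"
      have "(\<Sum>s<k. \<Sum>b<n. (\<Sum>a<n. (T a 0 * X)$$(i, s) * A$$(a, b)) * (Y * T 0 b)$$(s,j))
          = (\<Sum>s<k. \<Sum>b<n. \<Sum>a<n. t a b s)"
        unfolding t_def by (simp add: sum_distrib_right sum_distrib_left mult_ac)
      also have "\<dots> = (\<Sum>b<n. \<Sum>s<k. \<Sum>a<n. t a b s)" by (rule sum.swap)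
      also have "\<dots> = (\<Sum>b<n. \<Sum>a<n. \<Sum>s<k. t a b s)" by (rule sum.cong[OF refl], rule sum.swap)
      also have "\<dots> = (\<Sum>a<n. \<Sum>b<n. \<Sum>s<k. t a b s)" by (rule sum.swap)
      also have "\<dots> = (\<Sum>a<n. \<Sum>b<n. A$$(a,b) * (\<Sum>s<k. (T a 0 * X)$$(i, s) * (Y * T 0 b)$$(s,j)))"
        unfolding t_def by (simp add: sum_distrib_left)
      finally show ?thesis .
    qed
    also have "\<dots> = (\<Sum>a<n. \<Sum>b<n. A$$(a,b) * T a b $$ (i,j))"
    proof (intro sum.cong refl)
      fix a b assume a: "a \<in> {..<n}" and b: "b \<in> {..<n}"
      have "(\<Sum>s<k. (T a 0 * X)$$(i, s) * (Y * T 0 b)$$(s,j)) = ((T a 0 * X) * (Y * T 0 b))$$(i,j)"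
        by (rule mult_entry[OF TX YT i j, symmetric]) (use a b in auto)
      thus "A$$(a,b) * (\<Sum>s<k. (T a 0 * X)$$(i, s) * (Y * T 0 b)$$(s,j)) = A$$(a,b) * T a b $$ (i,j)"
        using a b by (simp add: TXYT)
    qed
    also have "\<dots> = Psi A $$ (i,j)" using i j by (simp add: Psi_def)
    finally show "(Sinv k X U * block_embed r k n A * S k Y V) $$ (i,j) = Psi A $$ (i,j)"
      unfolding B_def by simp
  qed (auto simp: Psi_def Sinv_def S_def)
qed

end

context musys_fac
begin

lemma S_transpose:
  assumes YX': "Y = transpose_mat X" and VU': "V = transpose_mat U"
    and Tt: "\<And>a. a < n \<Longrightarrow> T 0 a = transpose_mat (T a 0)"
  shows "S k Y V = transpose_mat (Sinv k X U)"
proof (rule eq_matI)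
  fix l j assume "l < dim_row (transpose_mat (Sinv k X U))" "j < dim_col (transpose_mat (Sinv k X U))"
  hence l: "l < r" and j: "j < r" by (auto simp: Sinv_def)
  show "S k Y V $$ (l,j) = transpose_mat (Sinv k X U) $$ (l,j)"
  proof (cases "l < k*n")
    case True
    note lk = divmod_facts[OF True]
    have "Y * T 0 (l mod n) = transpose_mat (T (l mod n) 0 * X)"
      unfolding YX' Tt[OF lk(2)] by (rule transpose_mult[symmetric, OF Tc X]) (use lk n0 in auto)
    hence "S k Y V $$ (l,j) = transpose_mat (T (l mod n) 0 * X) $$ (l div n, j)"
      using l j True by (simp add: So_e)
    also have "\<dots> = (T (l mod n) 0 * X) $$ (j, l div n)"
      using lk X Tc[OF lk(2) n0] j by (subst index_transpose_mat) auto
    also have "\<dots> = Sinv k X U $$ (j,l)" using l j True by (simp add: Si_e)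
    also have "\<dots> = transpose_mat (Sinv k X U) $$ (l,j)" using Si l j by auto
    finally show ?thesis .
  next
    case False
    have "S k Y V $$ (l,j) = V $$ (l - k*n, j)" using l j False by (simp add: So_e)
    also have "\<dots> = U $$ (j, l - k*n)" unfolding VU' using U l j rkm False by auto
    also have "\<dots> = Sinv k X U $$ (j,l)" using l j False by (simp add: Si_e)
    also have "\<dots> = transpose_mat (Sinv k X U) $$ (l,j)" using Si l j by auto
    finally show ?thesis .
  qed
qed (auto simp: S_def Sinv_def)

end

context musys
begin

lemma exists_S:
  "\<exists>k Si So. k*n \<le> r \<and> So \<in> carrier_mat r r \<and> Si \<in> carrier_mat r r \<and> So * Si = 1\<^sub>m r \<and> Si * So = 1\<^sub>m r
     \<and> (\<forall>A\<in>carrier_mat n n. Si * block_embed r k n A * So = Psi A)"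
proof -
  obtain k X Y where X: "X \<in> carrier_mat r k" and Y: "Y \<in> carrier_mat k r" and YX: "Y*X = 1\<^sub>m k"
    and XY: "T 0 0 = X*Y" and trk: "tr (T 0 0) = of_nat k"
    using idem_factor_tr[OF Tc[OF n0 n0]] Tm[OF n0 n0 n0 n0] by auto
  obtain m U V where U: "U \<in> carrier_mat r m" and V: "V \<in> carrier_mat m r" and VU: "V*U = 1\<^sub>m m"
    and UV: "Q = U*V" and trm: "tr Q = of_nat m"
    using idem_factor_tr[OF Q QQ] by auto
  have "tr Q = of_nat r - of_nat (n*k)" unfolding Q_def using P trP[OF trk] by (simp add: tr_minus[of _ r])
  hence "of_nat (k*n + m) = (of_nat r :: complex)" using trm by (simp add: mult.commute)
  hence rkm: "k*n + m = r" using of_nat_eq_iff by blast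
  interpret f: musys_fac n r T k m X Y U V
    by unfold_locales (use X Y YX XY U V VU UV rkm in auto)
  show ?thesis using f.Si f.So f.S_Sinv f.Sinv_S f.main_eq rkm by (intro exI[of _ k]) auto
qed

lemma P_sym:
  assumes Tt: "\<And>a b. a < n \<Longrightarrow> b < n \<Longrightarrow> transpose_mat (T a b) = T b a"
  shows "transpose_mat P = P"
proof (rule eq_matI)
  fix i j assume "i < dim_row P" "j < dim_col P"
  hence i: "i < r" and j: "j < r" using P by auto
  have "(\<Sum>a<n. T a a $$ (j,i)) = (\<Sum>a<n. T a a $$ (i,j))"
  proof (intro sum.cong refl)
    fix a assume "a \<in> {..<n}"
    hence a: "a < n" by simp
    show "T a a $$ (j,i) = T a a $$ (i,j)"
      using arg_cong[OF Tt[OF a a], of "\<lambda>A. A$$(i,j)"] Tc[OF a a] i j by simp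
  qed
  thus "transpose_mat P $$ (i,j) = P $$ (i,j)" using i j by (simp add: P_def)
qed (use P in auto)

lemma exists_S_orth:
  assumes Tt: "\<And>a b. a < n \<Longrightarrow> b < n \<Longrightarrow> transpose_mat (T a b) = T b a"
  shows "\<exists>k S. k*n \<le> r \<and> S \<in> carrier_mat r r \<and> S * transpose_mat S = 1\<^sub>m r \<and> transpose_mat S * S = 1\<^sub>m r
     \<and> (\<forall>A\<in>carrier_mat n n. transpose_mat S * block_embed r k n A * S = Psi A)"
proof -
  obtain k X0 Y0 where trk: "tr (T 0 0) = of_nat k"
    using idem_factor_tr[OF Tc[OF n0 n0]] Tm[OF n0 n0 n0 n0] by auto
  obtain X where X: "X \<in> carrier_mat r k" and XX: "transpose_mat X * X = 1\<^sub>m k" and XY: "X * transpose_mat X = T 0 0"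
    using sym_idem_factor[OF Tc[OF n0 n0] _ Tt[OF n0 n0] trk] Tm[OF n0 n0 n0 n0] by auto
  obtain m where trm: "tr Q = of_nat m"
    using idem_factor_tr[OF Q QQ] by auto
  have Qs: "transpose_mat Q = Q" unfolding Q_def using P P_sym[OF Tt] by (simp add: transpose_minus[of _ r r])
  obtain U where U: "U \<in> carrier_mat r m" and UU: "transpose_mat U * U = 1\<^sub>m m" and UV: "U * transpose_mat U = Q"
    using sym_idem_factor[OF Q QQ Qs trm] by auto
  have "tr Q = of_nat r - of_nat (n*k)" unfolding Q_def using P trP[OF trk] by (simp add: tr_minus[of _ r])
  hence "of_nat (k*n + m) = (of_nat r :: complex)" using trm by (simp add: mult.commute)
  hence rkm: "k*n + m = r" using of_nat_eq_iff by blast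
  interpret f: musys_fac n r T k m X "transpose_mat X" U "transpose_mat U"
    by unfold_locales (use X XX XY U UU UV rkm in auto)
  have St: "S k (transpose_mat X) (transpose_mat U) = transpose_mat (Sinv k X U)"
    by (rule f.S_transpose) (use Tt n0 in auto)
  show ?thesis
    using f.Si f.So f.S_Sinv f.Sinv_S f.main_eq rkm unfolding St
    by (intro exI[of _ k] exI[of _ "transpose_mat (Sinv k X U)"]) auto
qed

end

context fixes r :: nat
begin
abbreviation "Mr \<equiv> carrier_mat r r :: complex mat set"

lemma k_add_c: "A \<in> Mr \<Longrightarrow> B \<in> Mr \<Longrightarrow> A + B \<in> Mr" by simp
lemma k_mult_c: "A \<in> Mr \<Longrightarrow> B \<in> Mr \<Longrightarrow> A * B \<in> Mr" by simp
lemma k_smult_c: "A \<in> Mr \<Longrightarrow> c \<cdot>\<^sub>m A \<in> Mr" by simp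
lemma k_dl: "A \<in> Mr \<Longrightarrow> B \<in> Mr \<Longrightarrow> C \<in> Mr \<Longrightarrow> (A + B) * C = A * C + B * C"
  by (rule add_mult_distrib_mat)
lemma k_dr: "A \<in> Mr \<Longrightarrow> B \<in> Mr \<Longrightarrow> C \<in> Mr \<Longrightarrow> A * (B + C) = A * B + A * C"
  by (rule mult_add_distrib_mat)
lemma k_sl: "A \<in> Mr \<Longrightarrow> B \<in> Mr \<Longrightarrow> (c \<cdot>\<^sub>m A) * B = c \<cdot>\<^sub>m (A * B)"
  by (rule mult_smult_assoc_mat) auto
lemma k_sr: "A \<in> Mr \<Longrightarrow> B \<in> Mr \<Longrightarrow> A * (c \<cdot>\<^sub>m B) = c \<cdot>\<^sub>m (A * B)"
  by (rule mult_smult_distrib) auto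
lemma k_as: "A \<in> Mr \<Longrightarrow> B \<in> Mr \<Longrightarrow> C \<in> Mr \<Longrightarrow> (A * B) * C = A * (B * C)"
  by (rule assoc_mult_mat)

lemma k_smult_add: "A \<in> Mr \<Longrightarrow> B \<in> Mr \<Longrightarrow> c \<cdot>\<^sub>m (A + B) = c \<cdot>\<^sub>m A + c \<cdot>\<^sub>m B"
  by (rule add_smult_distrib_left_mat)
lemma k_smult_smult: "c \<cdot>\<^sub>m (d \<cdot>\<^sub>m A) = (c * d) \<cdot>\<^sub>m (A :: complex mat)"
  by (auto intro!: eq_matI)
lemma k_smult_zero: "c \<cdot>\<^sub>m 0\<^sub>m r r = (0\<^sub>m r r :: complex mat)"
  by (auto intro!: eq_matI)

lemma k_z1: "A \<in> Mr \<Longrightarrow> 0\<^sub>m r r + A = A" by simp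
lemma k_z2: "A \<in> Mr \<Longrightarrow> A + 0\<^sub>m r r = A" by simp
lemma k_z3: "A \<in> Mr \<Longrightarrow> 0\<^sub>m r r * A = 0\<^sub>m r r" by simp
lemma k_z4: "A \<in> Mr \<Longrightarrow> A * 0\<^sub>m r r = 0\<^sub>m r r" by simp
lemma k_zc: "0\<^sub>m r r \<in> Mr" by simp

lemmas kit = k_z1 k_z2 k_z3 k_z4 k_zc k_add_c k_mult_c k_smult_c k_dl k_dr k_sl k_sr k_as k_smult_add k_smult_smult k_smult_zero

lemma pair_rel:
  fixes X Y G :: "complex mat"
  assumes c: "X \<in> Mr" "Y \<in> Mr" "G \<in> Mr"
    and h1: "X*X = X" and h2: "Y*Y = Y" and h3: "X*Y = 0\<^sub>m r r" and h4: "Y*X = 0\<^sub>m r r"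
    and h5: "(X + G + Y) * (X + G + Y) = 2 \<cdot>\<^sub>m (X + G + Y)"
    and h6: "(X + (-1) \<cdot>\<^sub>m G + Y) * (X + (-1) \<cdot>\<^sub>m G + Y) = 2 \<cdot>\<^sub>m (X + (-1) \<cdot>\<^sub>m G + Y)"
    and h7: "(X + 2 \<cdot>\<^sub>m G + 4 \<cdot>\<^sub>m Y) * (4 \<cdot>\<^sub>m X + (-2) \<cdot>\<^sub>m G + Y) = 0\<^sub>m r r"
  shows "G * G = X + Y" "X * G = G * Y" "Y * G = G * X" "X * G + Y * G = G"
proof -
  have h1': "X * (X * Z) = X * Z" if "Z \<in> Mr" for Z using h1 c that by (simp add: k_as[symmetric])
  have h2': "Y * (Y * Z) = Y * Z" if "Z \<in> Mr" for Z using h2 c that by (simp add: k_as[symmetric])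
  have h3': "X * (Y * Z) = 0\<^sub>m r r" if "Z \<in> Mr" for Z using h3 c that by (simp add: k_as[symmetric])
  have h4': "Y * (X * Z) = 0\<^sub>m r r" if "Z \<in> Mr" for Z using h4 c that by (simp add: k_as[symmetric])
  note ss = kit c h1 h2 h3 h4 h1' h2' h3' h4'
  note h5' = h5[simplified ss]
  note h6' = h6[simplified ss]
  note h7' = h7[simplified ss]
  have gg: "G * G = X + Y"
  proof (rule eq_matI)
    fix i j assume "i < dim_row (X + Y)" "j < dim_col (X + Y)"
    hence ij: "i < r" "j < r" using c by auto
    show "(G * G) $$ (i,j) = (X + Y) $$ (i,j)"
      using arg_cong[OF h5', of "\<lambda>A. A$$(i,j)"] arg_cong[OF h6', of "\<lambda>A. A$$(i,j)"] ij c
      by (simp del: index_mult_mat(1) add: complex_eq_iff; linarith)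
  qed (use c in auto)
  have e8: "G*X + G*Y = X*G + Y*G"
  proof -
    have "G*(G*G) = (G*G)*G" using c by (simp add: k_as)
    thus ?thesis unfolding gg using c by (simp add: kit)
  qed
  show "G * G = X + Y" by (rule gg)
  show "X * G = G * Y"
  proof (rule eq_matI)
    fix i j assume "i < dim_row (G * Y)" "j < dim_col (G * Y)"
    hence ij: "i < r" "j < r" using c by auto
    show "(X * G) $$ (i,j) = (G * Y) $$ (i,j)"
      using arg_cong[OF h5', of "\<lambda>A. A$$(i,j)"] arg_cong[OF h6', of "\<lambda>A. A$$(i,j)"]
        arg_cong[OF h7', of "\<lambda>A. A$$(i,j)"] arg_cong[OF e8, of "\<lambda>A. A$$(i,j)"] ij c
      by (simp del: index_mult_mat(1) add: complex_eq_iff; linarith)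
  qed (use c in auto)
  show "X * G + Y * G = G"
  proof (rule eq_matI)
    fix i j assume "i < dim_row G" "j < dim_col G"
    hence ij: "i < r" "j < r" using c by auto
    show "(X * G + Y * G) $$ (i,j) = G $$ (i,j)"
      using arg_cong[OF h5', of "\<lambda>A. A$$(i,j)"] arg_cong[OF h6', of "\<lambda>A. A$$(i,j)"]
        arg_cong[OF h7', of "\<lambda>A. A$$(i,j)"] arg_cong[OF e8, of "\<lambda>A. A$$(i,j)"] ij c
      by (simp del: index_mult_mat(1) add: complex_eq_iff; linarith)
  qed (use c in auto)
  show "Y * G = G * X"
  proof (rule eq_matI)
    fix i j assume "i < dim_row (G * X)" "j < dim_col (G * X)"
    hence ij: "i < r" "j < r" using c by auto
    show "(Y * G) $$ (i,j) = (G * X) $$ (i,j)"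
      using arg_cong[OF h5', of "\<lambda>A. A$$(i,j)"] arg_cong[OF h6', of "\<lambda>A. A$$(i,j)"]
        arg_cong[OF h7', of "\<lambda>A. A$$(i,j)"] arg_cong[OF e8, of "\<lambda>A. A$$(i,j)"] ij c
      by (simp del: index_mult_mat(1) add: complex_eq_iff; linarith)
  qed (use c in auto)
qed

lemma triple_rel:
  fixes Pa Pb Pc Gab Gbc Gac :: "complex mat"
  assumes c: "Pa \<in> Mr" "Pb \<in> Mr" "Pc \<in> Mr" "Gab \<in> Mr" "Gbc \<in> Mr" "Gac \<in> Mr"
    and p1: "Pa*Pa = Pa" "Pb*Pb = Pb" "Pc*Pc = Pc"
    and p2: "Pa*Pb = 0\<^sub>m r r" "Pb*Pa = 0\<^sub>m r r" "Pa*Pc = 0\<^sub>m r r" "Pc*Pa = 0\<^sub>m r r" "Pb*Pc = 0\<^sub>m r r" "Pc*Pb = 0\<^sub>m r r"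
    and g1: "Pa*Gab = Gab*Pb" "Pb*Gab = Gab*Pa" "Pb*Gbc = Gbc*Pc" "Pc*Gbc = Gbc*Pb" "Pa*Gac = Gac*Pc" "Pc*Gac = Gac*Pa"
    and g0: "Pc*Gab = 0\<^sub>m r r" "Gab*Pc = 0\<^sub>m r r" "Pa*Gbc = 0\<^sub>m r r" "Gbc*Pa = 0\<^sub>m r r" "Pb*Gac = 0\<^sub>m r r" "Gac*Pb = 0\<^sub>m r r"
    and h: "(Pa + Pb + Pc + Gab + Gbc + Gac) * (Pa + Pb + Pc + Gab + Gbc + Gac) = 3 \<cdot>\<^sub>m (Pa + Pb + Pc + Gab + Gbc + Gac)"
  shows "Pa * Gab * (Pb * Gbc) = Pa * Gac"
proof -
  define Z where "Z = Pa + Pb + Pc + Gab + Gbc + Gac"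
  have Zc: "Z \<in> Mr" using c by (simp add: Z_def)
  have "Pa * (Z * Z) * Pc = Pa * (3 \<cdot>\<^sub>m Z) * Pc" using h Z_def by simp
  have r: "\<And>A B C Z. A \<in> Mr \<Longrightarrow> B \<in> Mr \<Longrightarrow> Z \<in> Mr \<Longrightarrow> A * B = C \<Longrightarrow> A * (B * Z) = C * Z"
    by (metis k_as)
  note rr = p1[THEN r[rotated 3]] p2[THEN r[rotated 3]] g1[THEN r[rotated 3]] g0[THEN r[rotated 3]]
  note ss = kit c rr p1 p2 g1 g0
  have e: "Pa * (Z * Z) * Pc = Pa * (3 \<cdot>\<^sub>m Z) * Pc" using h Z_def by simp
  note e' = e[unfolded Z_def, simplified ss, simplified ss]
  have g: "Gab*(Gbc*Pc) = Gac*Pc"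
  proof (rule eq_matI)
    fix i j assume "i < dim_row (Gac*Pc)" "j < dim_col (Gac*Pc)"
    hence ij: "i < r" "j < r" using c by auto
    show "(Gab*(Gbc*Pc)) $$ (i,j) = (Gac*Pc) $$ (i,j)"
      using arg_cong[OF e', of "\<lambda>A. A$$(i,j)"] ij c
      by (simp del: index_mult_mat(1) add: complex_eq_iff; linarith)
  qed (use c in auto)
  show ?thesis using g by (simp add: ss)
qed

end

locale prim =
  fixes n r :: nat and P :: "nat \<Rightarrow> complex mat" and G :: "nat \<Rightarrow> nat \<Rightarrow> complex mat"
  assumes n0: "0 < n"
    and Pc: "\<And>a. a < n \<Longrightarrow> P a \<in> carrier_mat r r"
    and Gc: "\<And>a b. a < n \<Longrightarrow> b < n \<Longrightarrow> G a b \<in> carrier_mat r r"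
    and Gsym: "\<And>a b. G a b = G b a"
    and PP: "\<And>a. a < n \<Longrightarrow> P a * P a = P a"
    and PP0: "\<And>a b. a < n \<Longrightarrow> b < n \<Longrightarrow> a \<noteq> b \<Longrightarrow> P a * P b = 0\<^sub>m r r"
    and GG: "\<And>a b. a < n \<Longrightarrow> b < n \<Longrightarrow> a \<noteq> b \<Longrightarrow> G a b * G a b = P a + P b"
    and PG: "\<And>a b. a < n \<Longrightarrow> b < n \<Longrightarrow> a \<noteq> b \<Longrightarrow> P a * G a b = G a b * P b"
    and PGs: "\<And>a b. a < n \<Longrightarrow> b < n \<Longrightarrow> a \<noteq> b \<Longrightarrow> P a * G a b + P b * G a b = G a b"
    and G3: "\<And>a b c. a < n \<Longrightarrow> b < n \<Longrightarrow> c < n \<Longrightarrow> a \<noteq> b \<Longrightarrow> b \<noteq> c \<Longrightarrow> a \<noteq> c \<Longrightarrow>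
              P a * G a b * (P b * G b c) = P a * G a c"
begin

lemmas kitr = k_z1[where r=r] k_z2[where r=r] k_z3[where r=r] k_z4[where r=r] k_zc[where r=r] k_add_c[where r=r] k_mult_c[where r=r] k_smult_c[where r=r] k_dl[where r=r] k_dr[where r=r] k_sl[where r=r] k_sr[where r=r] k_as[where r=r] k_smult_add[where r=r] k_smult_zero[where r=r] k_smult_smult

definition T where "T a b = (if a = b then P a else P a * G a b)"

lemma Tc: "a < n \<Longrightarrow> b < n \<Longrightarrow> T a b \<in> carrier_mat r r"
  using Pc Gc by (simp add: T_def kitr)

lemma TP: assumes ab: "a < n" "b < n" shows "T a b * P b = T a b"
proof (cases "a = b")
  case True thus ?thesis using PP ab by (simp add: T_def)
next
  case False
  have "P a * G a b * P b = G a b * (P b * P b)" using PG[OF ab False] Pc Gc ab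
    by (simp add: kitr)
  thus ?thesis using False PG[OF ab False] PP ab by (simp add: T_def)
qed

lemma PT: assumes ab: "a < n" "b < n" shows "P a * T a b = T a b"
proof (cases "a = b")
  case True thus ?thesis using PP ab by (simp add: T_def)
next
  case False
  have "P a * (P a * G a b) = (P a * P a) * G a b" using Pc Gc ab by (simp add: kitr)
  thus ?thesis using False PP ab by (simp add: T_def)
qed

lemma Tm: assumes abcd: "a < n" "b < n" "c < n" "d < n"
  shows "T a b * T c d = (if b = c then T a d else 0\<^sub>m r r)"
proof (cases "b = c")
  case False
  have "T a b * T c d = (T a b * P b) * (P c * T c d)" using TP PT abcd by simp
  also have "\<dots> = T a b * ((P b * P c) * T c d)"
    using abcd Tc Pc by (simp add: kitr)
  also have "\<dots> = 0\<^sub>m r r" using PP0[OF abcd(2,3) False] abcd Tc by (simp add: kitr)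
  finally show ?thesis using False by simp
next
  case True
  note bc = True
  show ?thesis
  proof (cases "a = b")
    case True
    thus ?thesis using bc PT abcd by (simp add: T_def)
  next
    case False
    note ab = False
    show ?thesis
    proof (cases "d = b")
      case True
      thus ?thesis using bc TP abcd by (simp add: T_def)
    next
      case False
      note db = False
      show ?thesis
      proof (cases "d = a")
        case True
        have "T a b * T b a = P a * G a b * (P b * G a b)" using ab Gsym by (simp add: T_def)
        also have "\<dots> = P a * (G a b * (G a b * P a))"
          using PG[OF abcd(2,1)] ab abcd Pc Gc Gsym by (simp add: kitr)
        also have "\<dots> = P a * ((P a + P b) * P a)"
          using GG[OF abcd(1,2) ab] abcd Pc Gc by (simp add: k_as[where r=r, symmetric])
        also have "\<dots> = P a" using abcd Pc PP PP0[OF abcd(2,1)] ab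
          by (simp add: kitr)
        finally show ?thesis using True bc by (simp add: T_def)
      next
        case False
        thus ?thesis using G3[OF abcd(1,2,4) ab db[symmetric] False[symmetric]] bc ab db
          by (simp add: T_def)
      qed
    qed
  qed
qed

lemma G_T: "a < n \<Longrightarrow> b < n \<Longrightarrow> a \<noteq> b \<Longrightarrow> G a b = T a b + T b a"
  using PGs[of a b] Gsym[of b a] by (simp add: T_def)

lemma musys: "musys n r T"
  by unfold_locales (use n0 Tc Tm in auto)

end

lemma (in vec_space) lin_indpt_single:
  assumes v: "v \<in> carrier_vec n" and v0: "v \<noteq> 0\<^sub>v n"
  shows "lin_indpt {v}"
  apply (rule finite_lin_indpt2)
  using v apply simp_all
proof -
  fix a assume lc: "lincomb a {v} = 0\<^sub>v n"
  obtain i where i: "i < n" "v $ i \<noteq> 0" using v v0 by (metis carrier_vecD eq_vecI index_zero_vec(1,2))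
  have "lincomb a {v} $ i = a v * v $ i" using lincomb_index[OF i(1), of "{v}" a] v by simp
  hence "a v * v $ i = 0" using lc i by simp
  thus "a v = 0" using i by simp
qed

lemma rank_outer_one:
  fixes u :: "nat \<Rightarrow> real"
  assumes j0: "j0 < n" "u j0 \<noteq> 0"
  shows "vec_space.rank n (mat n n (\<lambda>(i,j). u i * u j)) = 1"
proof -
  interpret vec_space "TYPE(real)" n .
  define R where "R = mat n n (\<lambda>(i,j). u i * u j)"
  have R: "R \<in> carrier_mat n n" by (simp add: R_def)
  have le: "rank R \<le> 1"
    by (rule rank_le_1_product_entries[OF R, of u u]) (simp add: R_def)
  have c: "col R j0 \<in> carrier_vec n" using R j0 by simp
  have "col R j0 $ j0 = u j0 * u j0" using j0 by (simp add: R_def)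
  hence c0: "col R j0 \<noteq> 0\<^sub>v n" using j0 by auto
  have "col R j0 \<in> set (cols R)" using R j0 by (simp add: cols_def)
  hence "rank R \<ge> card {col R j0}"
    by (intro rank_ge_card_indpt[OF R] lin_indpt_single[OF c c0]) auto
  thus ?thesis using le unfolding R_def by simp
qed

lemma outer_rank1:
  fixes s :: "nat \<Rightarrow> real"
  assumes N: "(\<Sum>i<n. s i * s i) \<noteq> 0"
  shows "mat n n (\<lambda>(i,j). s i * s j / (\<Sum>i<n. s i * s i)) \<in> real_rank1_sym_idems n"
proof -
  define N where "N = (\<Sum>i<n. s i * s i)"
  have "N \<ge> 0" unfolding N_def by (intro sum_nonneg) simp
  hence N0: "N > 0" using N unfolding N_def by linarith
  define R where "R = mat n n (\<lambda>(i,j). s i * s j / N)"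
  obtain j0 where j0: "j0 < n" "s j0 \<noteq> 0"
  proof -
    have "\<not> (\<forall>i<n. s i = 0)"
    proof
      assume "\<forall>i<n. s i = 0"
      hence "(\<Sum>i<n. s i * s i) = 0" by simp
      thus False using N by simp
    qed
    thus ?thesis using that by auto
  qed
  define u where "u = (\<lambda>i. s i / sqrt N)"
  have Ru: "R = mat n n (\<lambda>(i,j). u i * u j)"
    unfolding R_def u_def using N0 by (auto intro!: eq_matI simp: real_sqrt_mult[symmetric])
  have "vec_space.rank n R = 1" unfolding Ru by (rule rank_outer_one[OF j0(1)]) (use j0 N0 in \<open>simp add: u_def\<close>)
  moreover have "R * R = R"
  proof (rule eq_matI)
    fix i j assume "i < dim_row R" "j < dim_col R"
    hence ij: "i < n" "j < n" by (auto simp: R_def)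
    have "(R * R) $$ (i,j) = (\<Sum>l<n. (s i * s l / N) * (s l * s j / N))"
      using mult_entry[of R n n R n i j] ij by (simp add: R_def)
    also have "\<dots> = (\<Sum>l<n. (s i * s j / (N * N)) * (s l * s l))"
      by (intro sum.cong refl) (simp add: field_simps)
    also have "\<dots> = (s i * s j / (N * N)) * N"
      unfolding N_def by (simp add: sum_distrib_left)
    also have "\<dots> = s i * s j / N * (N / N)" by (simp add: field_simps)
    also have "\<dots> = R $$ (i,j)" using N0 ij by (simp add: R_def)
    finally show "(R * R) $$ (i,j) = R $$ (i,j)" .
  qed (auto simp: R_def)
  moreover have "transpose_mat R = R" by (auto intro!: eq_matI simp: R_def mult.commute)
  ultimately show ?thesis unfolding real_rank1_sym_idems_def R_def N_def by auto
qed

definition Ec :: "nat \<Rightarrow> nat \<Rightarrow> complex mat" where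
  "Ec n a = mat n n (\<lambda>(i,j). if i = a \<and> j = a then 1 else 0)"
definition Fc :: "nat \<Rightarrow> nat \<Rightarrow> nat \<Rightarrow> complex mat" where
  "Fc n a b = mat n n (\<lambda>(i,j). if (i = a \<and> j = b) \<or> (i = b \<and> j = a) then 1 else 0)"
definition Os :: "nat \<Rightarrow> (nat \<Rightarrow> real) \<Rightarrow> complex mat" where
  "Os n s = mat n n (\<lambda>(i,j). complex_of_real (s i * s j))"

lemma Fc_sym: "Fc n a b = Fc n b a" by (auto simp: Fc_def intro!: eq_matI)

lemma sym_Ec: "Ec n a \<in> sym_mats n" by (auto simp: sym_mats_def Ec_def intro!: eq_matI)
lemma sym_Fc: "Fc n a b \<in> sym_mats n" by (auto simp: sym_mats_def Fc_def intro!: eq_matI)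
lemma sym_Os: "Os n s \<in> sym_mats n" by (auto simp: sym_mats_def Os_def intro!: eq_matI simp: mult.commute)
lemma sym_add: "A \<in> sym_mats n \<Longrightarrow> B \<in> sym_mats n \<Longrightarrow> A + B \<in> sym_mats n"
  by (auto simp: sym_mats_def transpose_add)
lemma sym_smult: assumes "A \<in> sym_mats n" shows "c \<cdot>\<^sub>m A \<in> sym_mats n"
proof -
  have A: "A \<in> carrier_mat n n" "transpose_mat A = A" using assms by (auto simp: sym_mats_def)
  have "A $$ (j,i) = A $$ (i,j)" if "i < n" "j < n" for i j
    using arg_cong[OF A(2), of "\<lambda>M. M$$(i,j)"] that A(1) by auto
  thus ?thesis using A(1) by (auto simp: sym_mats_def intro!: eq_matI)
qed
lemma sym_carrier: "A \<in> sym_mats n \<Longrightarrow> A \<in> carrier_mat n n"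
  by (simp add: sym_mats_def)

lemma Os_map: "N \<noteq> 0 \<Longrightarrow>
   map_mat complex_of_real (mat n n (\<lambda>(i,j). s i * s j / N))
     = (1 / complex_of_real N) \<cdot>\<^sub>m Os n s"
  by (auto intro!: eq_matI simp: Os_def)

lemma sum_supp: fixes n :: nat shows "finite K \<Longrightarrow> K \<subseteq> {..<n} \<Longrightarrow> (\<And>i. i < n \<Longrightarrow> i \<notin> K \<Longrightarrow> f i = 0) \<Longrightarrow>
   (\<Sum>i<n. f i) = (\<Sum>i\<in>K. f i)"
  by (rule sum.mono_neutral_right) auto

locale phi =
  fixes n r :: nat and \<Phi> :: "complex mat \<Rightarrow> complex mat"
  assumes into: "\<And>A. A \<in> sym_mats n \<Longrightarrow> \<Phi> A \<in> carrier_mat r r"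
    and additive: "\<And>A B. A \<in> sym_mats n \<Longrightarrow> B \<in> sym_mats n \<Longrightarrow> \<Phi> (A + B) = \<Phi> A + \<Phi> B"
    and homog: "\<And>c A. A \<in> sym_mats n \<Longrightarrow> \<Phi> (c \<cdot>\<^sub>m A) = c \<cdot>\<^sub>m \<Phi> A"
    and zero_prod: "\<And>A B. A \<in> sym_mats n \<Longrightarrow> B \<in> sym_mats n \<Longrightarrow> A * B = 0\<^sub>m n n
                      \<Longrightarrow> \<Phi> A * \<Phi> B = 0\<^sub>m r r"
    and H: "\<forall>A \<in> real_rank1_sym_idems n.
             \<Phi> (map_mat complex_of_real A) * \<Phi> (map_mat complex_of_real A) = \<Phi> (map_mat complex_of_real A)"
begin

lemma Hs:
  assumes N: "(\<Sum>i<n. s i * s i) \<noteq> 0"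
  shows "\<Phi> (Os n s) * \<Phi> (Os n s) = complex_of_real (\<Sum>i<n. s i * s i) \<cdot>\<^sub>m \<Phi> (Os n s)"
proof -
  define N where "N = complex_of_real (\<Sum>i<n. s i * s i)"
  have N0: "N \<noteq> 0" unfolding N_def using N of_real_eq_0_iff by blast
  define M where "M = \<Phi> (Os n s)"
  have M: "M \<in> carrier_mat r r" using into[OF sym_Os] by (simp add: M_def)
  have "\<Phi> ((1/N) \<cdot>\<^sub>m Os n s) * \<Phi> ((1/N) \<cdot>\<^sub>m Os n s) = \<Phi> ((1/N) \<cdot>\<^sub>m Os n s)"
  proof -
    define R where "R = mat n n (\<lambda>(i,j). s i * s j / (\<Sum>i<n. s i * s i))"
    have "\<Phi> (map_mat complex_of_real R) * \<Phi> (map_mat complex_of_real R) = \<Phi> (map_mat complex_of_real R)"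
      using H outer_rank1[OF N] unfolding R_def by blast
    moreover have "map_mat complex_of_real R = (1/N) \<cdot>\<^sub>m Os n s"
      unfolding R_def N_def by (rule Os_map[OF N])
    ultimately show ?thesis by simp
  qed
  hence e: "((1/N) \<cdot>\<^sub>m M) * ((1/N) \<cdot>\<^sub>m M) = (1/N) \<cdot>\<^sub>m M" using homog[OF sym_Os] by (simp add: M_def)
  show ?thesis unfolding M_def[symmetric] N_def[symmetric]
  proof (rule eq_matI)
    fix i j assume "i < dim_row (N \<cdot>\<^sub>m M)" "j < dim_col (N \<cdot>\<^sub>m M)"
    hence ij: "i < r" "j < r" using M by auto
    have "((1/N) \<cdot>\<^sub>m M * ((1/N) \<cdot>\<^sub>m M)) = ((1/N) * (1/N)) \<cdot>\<^sub>m (M * M)"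
      using M by (simp add: mult_smult_assoc_mat[of _ r r _ r] mult_smult_distrib[of _ r r _ r] k_smult_smult)
    hence "((1/N) * (1/N)) * (M*M) $$ (i,j) = (1/N) * M $$ (i,j)"
      using arg_cong[OF e, of "\<lambda>A. A$$(i,j)"] ij M by (simp del: index_mult_mat(1))
    hence "(M*M) $$ (i,j) = N * M $$ (i,j)" using N0 by (simp add: field_simps)
    thus "(M*M) $$ (i,j) = (N \<cdot>\<^sub>m M) $$ (i,j)" using ij M by (simp del: index_mult_mat(1))
  qed (use M in auto)
qed

end

definition dl :: "nat \<Rightarrow> nat \<Rightarrow> real" where "dl a = (\<lambda>i. if i = a then 1 else 0)"

lemma O1: "Os n (dl a) = Ec n a"
  by (auto intro!: eq_matI simp: Os_def Ec_def dl_def)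
lemma O2: "a \<noteq> b \<Longrightarrow> Os n (\<lambda>i. dl a i + dl b i) = Ec n a + Fc n a b + Ec n b"
  by (auto intro!: eq_matI simp: Os_def Ec_def Fc_def dl_def)
lemma O3: "a \<noteq> b \<Longrightarrow> Os n (\<lambda>i. dl a i - dl b i) = Ec n a + (-1) \<cdot>\<^sub>m Fc n a b + Ec n b"
  by (auto intro!: eq_matI simp: Os_def Ec_def Fc_def dl_def)
lemma O4: "a \<noteq> b \<Longrightarrow> b \<noteq> c \<Longrightarrow> a \<noteq> c \<Longrightarrow> Os n (\<lambda>i. dl a i + dl b i + dl c i) =
   Ec n a + Ec n b + Ec n c + Fc n a b + Fc n b c + Fc n a c"
  by (auto intro!: eq_matI simp: Os_def Ec_def Fc_def dl_def)

lemma N1: "a < n \<Longrightarrow> (\<Sum>i<n. dl a i * dl a i) = 1"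
  by (subst sum_supp[of "{a}"]) (auto simp: dl_def)
lemma N2: "a < n \<Longrightarrow> b < n \<Longrightarrow> a \<noteq> b \<Longrightarrow> (\<Sum>i<n. (dl a i + dl b i) * (dl a i + dl b i)) = 2"
  by (subst sum_supp[of "{a,b}"]) (auto simp: dl_def)
lemma N3: "a < n \<Longrightarrow> b < n \<Longrightarrow> a \<noteq> b \<Longrightarrow> (\<Sum>i<n. (dl a i - dl b i) * (dl a i - dl b i)) = 2"
  by (subst sum_supp[of "{a,b}"]) (auto simp: dl_def)
lemma N4: "a < n \<Longrightarrow> b < n \<Longrightarrow> c < n \<Longrightarrow> a \<noteq> b \<Longrightarrow> b \<noteq> c \<Longrightarrow> a \<noteq> c \<Longrightarrow>
   (\<Sum>i<n. (dl a i + dl b i + dl c i) * (dl a i + dl b i + dl c i)) = 3"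
  by (subst sum_supp[of "{a,b,c}"]) (auto simp: dl_def)

lemma Z1: "a \<noteq> b \<Longrightarrow> Ec n a * Ec n b = 0\<^sub>m n n"
  by (auto intro!: eq_matI sum.neutral simp: Ec_def scalar_prod_def)
lemma Z2: "c \<noteq> a \<Longrightarrow> c \<noteq> b \<Longrightarrow> Ec n c * Fc n a b = 0\<^sub>m n n"
  by (auto intro!: eq_matI sum.neutral simp: Ec_def Fc_def scalar_prod_def)
lemma Z2': "c \<noteq> a \<Longrightarrow> c \<noteq> b \<Longrightarrow> Fc n a b * Ec n c = 0\<^sub>m n n"
  by (auto intro!: eq_matI sum.neutral simp: Ec_def Fc_def scalar_prod_def)
lemma Z3:
  assumes ab: "a < n" "b < n" "a \<noteq> b"
  shows "(Ec n a + 2 \<cdot>\<^sub>m Fc n a b + 4 \<cdot>\<^sub>m Ec n b) * (4 \<cdot>\<^sub>m Ec n a + (-2) \<cdot>\<^sub>m Fc n a b + Ec n b) = 0\<^sub>m n n"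
proof (rule eq_matI)
  fix i j assume "i < dim_row (0\<^sub>m n n :: complex mat)" "j < dim_col (0\<^sub>m n n :: complex mat)"
  hence ij: "i < n" "j < n" by auto
  define A where "A = Ec n a + 2 \<cdot>\<^sub>m Fc n a b + 4 \<cdot>\<^sub>m Ec n b"
  define B where "B = 4 \<cdot>\<^sub>m Ec n a + (-2) \<cdot>\<^sub>m Fc n a b + Ec n b"
  have A: "A \<in> carrier_mat n n" and B: "B \<in> carrier_mat n n" by (auto simp: A_def B_def Ec_def Fc_def)
  have "(A * B) $$ (i,j) = (\<Sum>l<n. A$$(i,l) * B$$(l,j))" by (rule mult_entry[OF A B ij])
  also have "\<dots> = (\<Sum>l\<in>{a,b}. A$$(i,l) * B$$(l,j))"
    by (rule sum_supp) (use ab ij in \<open>auto simp: A_def Ec_def Fc_def\<close>)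
  also have "\<dots> = 0" using ab ij by (auto simp: A_def B_def Ec_def Fc_def)
  finally show "(A * B) $$ (i,j) = 0\<^sub>m n n $$ (i,j)" using ij by simp
qed (auto simp: Ec_def Fc_def)

lemma one_smult_m[simp]: "(1::complex) \<cdot>\<^sub>m A = A" by (auto intro!: eq_matI)

context phi
begin

lemmas symfacts = sym_add sym_smult sym_Ec sym_Fc
lemma Phi_add: "A \<in> sym_mats n \<Longrightarrow> B \<in> sym_mats n \<Longrightarrow> \<Phi> (A + B) = \<Phi> A + \<Phi> B" by (rule additive)

lemma PPa: "a < n \<Longrightarrow> \<Phi> (Ec n a) * \<Phi> (Ec n a) = \<Phi> (Ec n a)"
  using Hs[of "dl a"] N1[of a] O1[of n a] into[OF sym_Ec] by simp

lemma pair_facts: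
  assumes ab: "a < n" "b < n" "a \<noteq> b"
  shows "\<Phi> (Fc n a b) * \<Phi> (Fc n a b) = \<Phi> (Ec n a) + \<Phi> (Ec n b)"
    "\<Phi> (Ec n a) * \<Phi> (Fc n a b) = \<Phi> (Fc n a b) * \<Phi> (Ec n b)"
    "\<Phi> (Ec n b) * \<Phi> (Fc n a b) = \<Phi> (Fc n a b) * \<Phi> (Ec n a)"
    "\<Phi> (Ec n a) * \<Phi> (Fc n a b) + \<Phi> (Ec n b) * \<Phi> (Fc n a b) = \<Phi> (Fc n a b)"
proof -
  define X where "X = \<Phi> (Ec n a)"
  define Y where "Y = \<Phi> (Ec n b)"
  define G where "G = \<Phi> (Fc n a b)"
  have c: "X \<in> carrier_mat r r" "Y \<in> carrier_mat r r" "G \<in> carrier_mat r r"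
    using into sym_Ec sym_Fc by (auto simp: X_def Y_def G_def)
  have h1: "X*X = X" using PPa ab by (simp add: X_def)
  have h2: "Y*Y = Y" using PPa ab by (simp add: Y_def)
  have h3: "X*Y = 0\<^sub>m r r" unfolding X_def Y_def by (rule zero_prod[OF sym_Ec sym_Ec Z1]) (use ab in auto)
  have h4: "Y*X = 0\<^sub>m r r" unfolding X_def Y_def by (rule zero_prod[OF sym_Ec sym_Ec Z1]) (use ab in auto)
  have "\<Phi> (Os n (\<lambda>i. dl a i + dl b i)) = X + G + Y"
    unfolding O2[OF ab(3)] X_def Y_def G_def by (simp add: Phi_add symfacts)
  hence h5: "(X + G + Y) * (X + G + Y) = 2 \<cdot>\<^sub>m (X + G + Y)"
    using Hs[of "\<lambda>i. dl a i + dl b i"] N2[OF ab] by simp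
  have "\<Phi> (Os n (\<lambda>i. dl a i - dl b i)) = X + (-1) \<cdot>\<^sub>m G + Y"
    unfolding O3[OF ab(3)] X_def Y_def G_def by (simp add: Phi_add symfacts homog)
  hence h6: "(X + (-1) \<cdot>\<^sub>m G + Y) * (X + (-1) \<cdot>\<^sub>m G + Y) = 2 \<cdot>\<^sub>m (X + (-1) \<cdot>\<^sub>m G + Y)"
    using Hs[of "\<lambda>i. dl a i - dl b i"] N3[OF ab] by simp
  have h7: "(X + 2 \<cdot>\<^sub>m G + 4 \<cdot>\<^sub>m Y) * (4 \<cdot>\<^sub>m X + (-2) \<cdot>\<^sub>m G + Y) = 0\<^sub>m r r"
  proof -
    have "\<Phi> (Ec n a + 2 \<cdot>\<^sub>m Fc n a b + 4 \<cdot>\<^sub>m Ec n b) * \<Phi> (4 \<cdot>\<^sub>m Ec n a + (-2) \<cdot>\<^sub>m Fc n a b + Ec n b) = 0\<^sub>m r r"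
      by (rule zero_prod[OF _ _ Z3[OF ab]]) (simp_all add: symfacts)
    thus ?thesis unfolding X_def Y_def G_def by (simp add: Phi_add symfacts homog)
  qed
  note pr = pair_rel[OF c h1 h2 h3 h4 h5 h6 h7]
  show "\<Phi> (Fc n a b) * \<Phi> (Fc n a b) = \<Phi> (Ec n a) + \<Phi> (Ec n b)"
    "\<Phi> (Ec n a) * \<Phi> (Fc n a b) = \<Phi> (Fc n a b) * \<Phi> (Ec n b)"
    "\<Phi> (Ec n b) * \<Phi> (Fc n a b) = \<Phi> (Fc n a b) * \<Phi> (Ec n a)"
    "\<Phi> (Ec n a) * \<Phi> (Fc n a b) + \<Phi> (Ec n b) * \<Phi> (Fc n a b) = \<Phi> (Fc n a b)"
    using pr unfolding X_def Y_def G_def by auto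
qed

end

locale phi_pos = phi +
  assumes n0: "0 < n"
begin

lemma triple_fact:
  assumes abc: "a < n" "b < n" "c < n" "a \<noteq> b" "b \<noteq> c" "a \<noteq> c"
  shows "\<Phi> (Ec n a) * \<Phi> (Fc n a b) * (\<Phi> (Ec n b) * \<Phi> (Fc n b c)) = \<Phi> (Ec n a) * \<Phi> (Fc n a c)"
proof -
  define Pa where "Pa = \<Phi> (Ec n a)"
  define Pb where "Pb = \<Phi> (Ec n b)"
  define Pc where "Pc = \<Phi> (Ec n c)"
  define Gab where "Gab = \<Phi> (Fc n a b)"
  define Gbc where "Gbc = \<Phi> (Fc n b c)"
  define Gac where "Gac = \<Phi> (Fc n a c)"
  note defs = Pa_def Pb_def Pc_def Gab_def Gbc_def Gac_def
  have c: "Pa \<in> carrier_mat r r" "Pb \<in> carrier_mat r r" "Pc \<in> carrier_mat r r"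
    "Gab \<in> carrier_mat r r" "Gbc \<in> carrier_mat r r" "Gac \<in> carrier_mat r r"
    using into sym_Ec sym_Fc by (auto simp: defs)
  have p1: "Pa*Pa = Pa" "Pb*Pb = Pb" "Pc*Pc = Pc" using PPa abc by (auto simp: defs)
  have zp: "\<Phi> (Ec n x) * \<Phi> (Ec n y) = 0\<^sub>m r r" if "x \<noteq> y" for x y
    by (rule zero_prod[OF sym_Ec sym_Ec Z1[OF that]])
  have p2: "Pa*Pb = 0\<^sub>m r r" "Pb*Pa = 0\<^sub>m r r" "Pa*Pc = 0\<^sub>m r r" "Pc*Pa = 0\<^sub>m r r" "Pb*Pc = 0\<^sub>m r r" "Pc*Pb = 0\<^sub>m r r"
    using zp abc by (auto simp: defs)
  note pab = pair_facts[OF abc(1,2,4)] and pbc = pair_facts[OF abc(2,3,5)] and pac = pair_facts[OF abc(1,3,6)]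
  have g1: "Pa*Gab = Gab*Pb" "Pb*Gab = Gab*Pa" "Pb*Gbc = Gbc*Pc" "Pc*Gbc = Gbc*Pb" "Pa*Gac = Gac*Pc" "Pc*Gac = Gac*Pa"
    using pab pbc pac by (auto simp: defs)
  have z2: "\<Phi> (Ec n z) * \<Phi> (Fc n x y) = 0\<^sub>m r r" "\<Phi> (Fc n x y) * \<Phi> (Ec n z) = 0\<^sub>m r r"
    if "z \<noteq> x" "z \<noteq> y" for x y z
    using zero_prod[OF sym_Ec sym_Fc Z2[OF that]] zero_prod[OF sym_Fc sym_Ec Z2'[OF that]] by auto
  have g0: "Pc*Gab = 0\<^sub>m r r" "Gab*Pc = 0\<^sub>m r r" "Pa*Gbc = 0\<^sub>m r r" "Gbc*Pa = 0\<^sub>m r r" "Pb*Gac = 0\<^sub>m r r" "Gac*Pb = 0\<^sub>m r r"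
    using z2 abc by (auto simp: defs)
  have "\<Phi> (Os n (\<lambda>i. dl a i + dl b i + dl c i)) = Pa + Pb + Pc + Gab + Gbc + Gac"
    unfolding O4[OF abc(4,5,6)] defs by (simp add: Phi_add symfacts)
  hence h: "(Pa + Pb + Pc + Gab + Gbc + Gac) * (Pa + Pb + Pc + Gab + Gbc + Gac) = 3 \<cdot>\<^sub>m (Pa + Pb + Pc + Gab + Gbc + Gac)"
    using Hs[of "\<lambda>i. dl a i + dl b i + dl c i"] N4[OF abc] by simp
  show ?thesis using triple_rel[OF c p1 p2 g1 g0 h] by (simp add: defs)
qed

lemma is_prim: "prim n r (\<lambda>a. \<Phi> (Ec n a)) (\<lambda>a b. \<Phi> (Fc n a b))"
proof
  show "0 < n" by (rule n0)
  show "\<And>a. \<Phi> (Ec n a) \<in> carrier_mat r r" using into sym_Ec by auto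
  show "\<And>a b. \<Phi> (Fc n a b) \<in> carrier_mat r r" using into sym_Fc by auto
  show "\<And>a b. \<Phi> (Fc n a b) = \<Phi> (Fc n b a)" using Fc_sym by metis
  show "\<And>a. a < n \<Longrightarrow> \<Phi> (Ec n a) * \<Phi> (Ec n a) = \<Phi> (Ec n a)" by (rule PPa)
  show "\<And>a b. a \<noteq> b \<Longrightarrow> \<Phi> (Ec n a) * \<Phi> (Ec n b) = 0\<^sub>m r r"
    by (rule zero_prod[OF sym_Ec sym_Ec Z1])
  show "\<And>a b. a < n \<Longrightarrow> b < n \<Longrightarrow> a \<noteq> b \<Longrightarrow> \<Phi> (Fc n a b) * \<Phi> (Fc n a b) = \<Phi> (Ec n a) + \<Phi> (Ec n b)"
    using pair_facts by blast
  show "\<And>a b. a < n \<Longrightarrow> b < n \<Longrightarrow> a \<noteq> b \<Longrightarrow> \<Phi> (Ec n a) * \<Phi> (Fc n a b) = \<Phi> (Fc n a b) * \<Phi> (Ec n b)"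
    using pair_facts by blast
  show "\<And>a b. a < n \<Longrightarrow> b < n \<Longrightarrow> a \<noteq> b \<Longrightarrow> \<Phi> (Ec n a) * \<Phi> (Fc n a b) + \<Phi> (Ec n b) * \<Phi> (Fc n a b) = \<Phi> (Fc n a b)"
    using pair_facts by blast
  show "\<And>a b c. a < n \<Longrightarrow> b < n \<Longrightarrow> c < n \<Longrightarrow> a \<noteq> b \<Longrightarrow> b \<noteq> c \<Longrightarrow> a \<noteq> c \<Longrightarrow>
     \<Phi> (Ec n a) * \<Phi> (Fc n a b) * (\<Phi> (Ec n b) * \<Phi> (Fc n b c)) = \<Phi> (Ec n a) * \<Phi> (Fc n a c)"
    by (rule triple_fact)
qed

end

definition restr :: "nat \<Rightarrow> complex mat \<Rightarrow> (nat \<times> nat) set \<Rightarrow> complex mat" where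
  "restr n A D = mat n n (\<lambda>(i,j). if (min i j, max i j) \<in> D then A$$(i,j) else 0)"

lemma sym_entry: "A \<in> sym_mats n \<Longrightarrow> i < n \<Longrightarrow> j < n \<Longrightarrow> A$$(j,i) = A$$(i,j)"
  unfolding sym_mats_def by (metis (mono_tags, lifting) carrier_matD(1,2) index_transpose_mat(1) mem_Collect_eq)

lemma Ec_carrier[simp]: "Ec n a \<in> carrier_mat n n" by (simp add: Ec_def)
lemma Fc_carrier[simp]: "Fc n a b \<in> carrier_mat n n" by (simp add: Fc_def)

lemma restr_sym: assumes "A \<in> sym_mats n" shows "restr n A D \<in> sym_mats n"
  using sym_entry[OF assms] by (auto simp: sym_mats_def restr_def intro!: eq_matI simp: min.commute max.commute)

lemma restr_empty: "restr n A {} = 0\<^sub>m n n"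
  by (auto simp: restr_def intro!: eq_matI)

lemma restr_insert: "p \<notin> D \<Longrightarrow> restr n A (insert p D) = restr n A D + restr n A {p}"
  by (auto simp: restr_def intro!: eq_matI)

lemma restr_diag: "a < n \<Longrightarrow> restr n A {(a,a)} = A$$(a,a) \<cdot>\<^sub>m Ec n a"
  by (auto simp: restr_def Ec_def intro!: eq_matI simp: min_def max_def split: if_splits)

lemma restr_off: assumes "A \<in> sym_mats n" "a < b" "b < n"
  shows "restr n A {(a,b)} = A$$(a,b) \<cdot>\<^sub>m Fc n a b"
  using assms sym_entry[OF assms(1)]
  by (auto simp: restr_def Fc_def intro!: eq_matI simp: min_def max_def split: if_splits)

lemma restr_all: assumes "A \<in> sym_mats n" shows "restr n A {(a,b). a \<le> b \<and> b < n} = A"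
  using assms by (auto simp: restr_def sym_mats_def intro!: eq_matI simp: min_def max_def)

context phi_pos
begin

sublocale pr: prim n r "\<lambda>a. \<Phi> (Ec n a)" "\<lambda>a b. \<Phi> (Fc n a b)" by (rule is_prim)
sublocale ms: musys n r pr.T by (rule pr.musys)

lemma Phi0: "\<Phi> (0\<^sub>m n n) = 0\<^sub>m r r"
proof -
  have z: "0\<^sub>m n n \<in> sym_mats n" by (auto simp: sym_mats_def intro!: eq_matI)
  have "\<Phi> (0 \<cdot>\<^sub>m 0\<^sub>m n n) = 0 \<cdot>\<^sub>m \<Phi> (0\<^sub>m n n)" by (rule homog[OF z])
  moreover have "(0::complex) \<cdot>\<^sub>m 0\<^sub>m n n = 0\<^sub>m n n" by (auto intro!: eq_matI)
  moreover have "(0::complex) \<cdot>\<^sub>m \<Phi> (0\<^sub>m n n) = 0\<^sub>m r r" using into[OF z] by (auto intro!: eq_matI)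
  ultimately show ?thesis by simp
qed

lemma Psi_e: "i < r \<Longrightarrow> j < r \<Longrightarrow> ms.Psi A $$ (i,j) = (\<Sum>a<n. \<Sum>b<n. A$$(a,b) * pr.T a b $$ (i,j))"
  by (simp add: ms.Psi_def)

lemma Psi_add: "A \<in> carrier_mat n n \<Longrightarrow> B \<in> carrier_mat n n \<Longrightarrow> ms.Psi (A + B) = ms.Psi A + ms.Psi B"
  by (auto intro!: eq_matI simp: ms.Psi_def algebra_simps sum.distrib)

lemma Psi_smult: "A \<in> carrier_mat n n \<Longrightarrow> ms.Psi (c \<cdot>\<^sub>m A) = c \<cdot>\<^sub>m ms.Psi A"
  by (auto intro!: eq_matI simp: ms.Psi_def sum_distrib_left mult.assoc)

lemma Psi0: "ms.Psi (0\<^sub>m n n) = 0\<^sub>m r r"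
  by (auto intro!: eq_matI simp: ms.Psi_def)

lemma Psi_Ec: assumes a: "a < n" shows "ms.Psi (Ec n a) = \<Phi> (Ec n a)"
proof (rule eq_matI)
  fix i j assume "i < dim_row (\<Phi> (Ec n a))" "j < dim_col (\<Phi> (Ec n a))"
  hence ij: "i < r" "j < r" using into[OF sym_Ec] by (metis carrier_matD(1,2))+
  have "(\<Sum>a'<n. \<Sum>b<n. Ec n a $$ (a',b) * pr.T a' b $$ (i,j)) = (\<Sum>a'\<in>{a}. \<Sum>b\<in>{a}. Ec n a $$ (a',b) * pr.T a' b $$ (i,j))"
    using a by (subst sum_supp[of "{a}"], auto simp: Ec_def intro!: sum.neutral, subst sum_supp[of "{a}"], auto simp: Ec_def)
  also have "\<dots> = pr.T a a $$ (i,j)" using a by (simp add: Ec_def)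
  finally show "ms.Psi (Ec n a) $$ (i,j) = \<Phi> (Ec n a) $$ (i,j)" using ij by (simp add: Psi_e pr.T_def)
qed (simp_all add: ms.Psi_def carrier_matD[OF into[OF sym_Ec]])

lemma Psi_Fc: assumes ab: "a < n" "b < n" "a \<noteq> b" shows "ms.Psi (Fc n a b) = \<Phi> (Fc n a b)"
proof (rule eq_matI)
  fix i j assume "i < dim_row (\<Phi> (Fc n a b))" "j < dim_col (\<Phi> (Fc n a b))"
  hence ij: "i < r" "j < r" using into[OF sym_Fc] by (metis carrier_matD(1,2))+
  have inner: "(\<Sum>b'<n. Fc n a b $$ (a',b') * pr.T a' b' $$ (i,j)) =
      (if a' = a then pr.T a b $$ (i,j) else if a' = b then pr.T b a $$ (i,j) else 0)" if a': "a' < n" for a'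
  proof -
    have "(\<Sum>b'<n. Fc n a b $$ (a',b') * pr.T a' b' $$ (i,j)) = (\<Sum>b'\<in>{a,b}. Fc n a b $$ (a',b') * pr.T a' b' $$ (i,j))"
      using ab a' by (intro sum_supp) (auto simp: Fc_def)
    thus ?thesis using ab a' by (auto simp: Fc_def)
  qed
  have "(\<Sum>a'<n. \<Sum>b'<n. Fc n a b $$ (a',b') * pr.T a' b' $$ (i,j))
     = (\<Sum>a'<n. (if a' = a then pr.T a b $$ (i,j) else if a' = b then pr.T b a $$ (i,j) else 0))"
    by (intro sum.cong refl) (simp add: inner)
  also have "\<dots> = (\<Sum>a'\<in>{a,b}. (if a' = a then pr.T a b $$ (i,j) else if a' = b then pr.T b a $$ (i,j) else 0))"
    using ab by (intro sum_supp) auto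
  also have "\<dots> = pr.T a b $$ (i,j) + pr.T b a $$ (i,j)" using ab by simp
  also have "\<dots> = \<Phi> (Fc n a b) $$ (i,j)"
    using pr.G_T[OF ab] pr.Tc[of a b] pr.Tc[of b a] ab ij by simp
  finally show "ms.Psi (Fc n a b) $$ (i,j) = \<Phi> (Fc n a b) $$ (i,j)" using ij by (simp add: Psi_e)
qed (simp_all add: ms.Psi_def carrier_matD[OF into[OF sym_Fc]])

lemma Phi_Psi: assumes A: "A \<in> sym_mats n" shows "\<Phi> A = ms.Psi A"
proof -
  have Ac: "A \<in> carrier_mat n n" using A by (simp add: sym_mats_def)
  have fin: "finite {(a,b). a \<le> b \<and> b < (n::nat)}"
    by (rule finite_subset[of _ "{..<n} \<times> {..<n}"]) auto
  have "\<Phi> (restr n A D) = ms.Psi (restr n A D)" if "D \<subseteq> {(a,b). a \<le> b \<and> b < n}" for D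
  proof -
    have "finite D" using finite_subset[OF that fin] .
    thus ?thesis using that
    proof (induction D rule: finite_induct)
      case empty
      thus ?case by (simp add: restr_empty Phi0 Psi0)
    next
      case (insert p D)
      obtain a b where p: "p = (a,b)" by (cases p)
      have ab: "a \<le> b" "b < n" using insert.prems p by auto
      have single: "\<Phi> (restr n A {p}) = ms.Psi (restr n A {p})"
      proof (cases "a = b")
        case True
        thus ?thesis using ab p by (simp add: restr_diag homog sym_Ec Psi_smult Psi_Ec)
      next
        case False
        hence ab': "a < b" using ab by simp
        show ?thesis unfolding p restr_off[OF A ab' ab(2)]
          using ab' ab False by (simp add: homog sym_Fc Psi_smult Psi_Fc)
      qed
      have "\<Phi> (restr n A (insert p D)) = \<Phi> (restr n A D) + \<Phi> (restr n A {p})"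
        unfolding restr_insert[OF insert.hyps(2)] by (rule additive[OF restr_sym[OF A] restr_sym[OF A]])
      also have "\<dots> = ms.Psi (restr n A D) + ms.Psi (restr n A {p})"
        using insert.IH insert.prems single by simp
      also have "\<dots> = ms.Psi (restr n A (insert p D))"
        unfolding restr_insert[OF insert.hyps(2)] by (rule Psi_add[symmetric]) (simp_all add: restr_def)
      finally show ?case .
    qed
  qed
  from this[of "{(a,b). a \<le> b \<and> b < n}"] show ?thesis using restr_all[OF A] by simp
qed

end

lemma block_embed_mult:
  assumes A: "A \<in> carrier_mat n n" and C: "C \<in> carrier_mat n n" and kn: "k*n \<le> r"
  shows "block_embed r k n A * block_embed r k n C = block_embed r k n (A * C)"
proof (rule eq_matI)
  fix i j assume "i < dim_row (block_embed r k n (A * C))" "j < dim_col (block_embed r k n (A * C))"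
  hence ij: "i < r" "j < r" by (auto simp: block_embed_def)
  have kn': "k*n + (r - k*n) = r" using kn by simp
  have "(block_embed r k n A * block_embed r k n C) $$ (i,j) = (\<Sum>l<r. block_embed r k n A $$ (i,l) * block_embed r k n C $$ (l,j))"
    by (rule mult_entry[OF be_carrier be_carrier ij])
  also have "\<dots> = (\<Sum>s<k. \<Sum>c<n. block_embed r k n A $$ (i,s*n+c) * block_embed r k n C $$ (s*n+c,j))
      + (\<Sum>l<r - k*n. block_embed r k n A $$ (i,k*n+l) * block_embed r k n C $$ (k*n+l,j))"
    by (rule sum_split_r[OF kn'])
  also have "(\<Sum>l<r - k*n. block_embed r k n A $$ (i,k*n+l) * block_embed r k n C $$ (k*n+l,j)) = 0"
    using ij kn by (intro sum.neutral) (auto simp: be_entry)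
  also have "(\<Sum>s<k. \<Sum>c<n. block_embed r k n A $$ (i,s*n+c) * block_embed r k n C $$ (s*n+c,j))
     = (\<Sum>s<k. \<Sum>c<n. if i < k*n \<and> j < k*n \<and> s = i div n \<and> s = j div n then A $$ (i mod n, c) * C $$ (c, j mod n) else 0)"
  proof (intro sum.cong refl)
    fix s c assume s: "s \<in> {..<k}" and c: "c \<in> {..<n}"
    have lt: "s*n+c < k*n"
    proof -
      have "s*n + c < s*n + n" using c by simp
      also have "\<dots> = Suc s * n" by simp
      also have "\<dots> \<le> k*n" using s by (intro mult_le_mono1) simp
      finally show ?thesis .
    qed
    show "block_embed r k n A $$ (i,s*n+c) * block_embed r k n C $$ (s*n+c,j) =
      (if i < k*n \<and> j < k*n \<and> s = i div n \<and> s = j div n then A $$ (i mod n, c) * C $$ (c, j mod n) else 0)"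
      using lt kn ij c by (auto simp: be_entry divmod_blk)
  qed
  also have "\<dots> = block_embed r k n (A * C) $$ (i,j)"
  proof (cases "i < k*n \<and> j < k*n \<and> i div n = j div n")
    case True
    have n0: "0 < n" using True by (cases n) auto
    have idk: "i div n < k" using True by (simp add: less_mult_imp_div_less)
    have "(\<Sum>s<k. \<Sum>c<n. if i < k*n \<and> j < k*n \<and> s = i div n \<and> s = j div n then A $$ (i mod n, c) * C $$ (c, j mod n) else 0)
       = (\<Sum>s<k. if s = i div n then (\<Sum>c<n. A $$ (i mod n, c) * C $$ (c, j mod n)) else 0)"
      using True by (intro sum.cong refl) auto
    also have "\<dots> = (\<Sum>c<n. A $$ (i mod n, c) * C $$ (c, j mod n))" using idk by (simp add: sum.delta')
    also have "\<dots> = (A * C) $$ (i mod n, j mod n)"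
      by (rule mult_entry[OF A C, symmetric]) (use n0 in auto)
    finally show ?thesis using True ij by (simp add: be_entry)
  next
    case False
    thus ?thesis using ij by (auto simp: be_entry intro!: sum.neutral)
  qed
  finally show "(block_embed r k n A * block_embed r k n C) $$ (i,j) = block_embed r k n (A * C) $$ (i,j)" by simp
qed (auto simp: block_embed_def)

lemma block_embed_transpose:
  assumes A: "A \<in> carrier_mat n n"
  shows "transpose_mat (block_embed r k n A) = block_embed r k n (transpose_mat A)"
proof (rule eq_matI)
  fix i j assume "i < dim_row (block_embed r k n (transpose_mat A))" "j < dim_col (block_embed r k n (transpose_mat A))"
  hence ij: "i < r" "j < r" by (auto simp: block_embed_def)
  show "transpose_mat (block_embed r k n A) $$ (i,j) = block_embed r k n (transpose_mat A) $$ (i,j)"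
  proof (cases "i < k*n \<and> j < k*n \<and> i div n = j div n")
    case True
    have n0: "0 < n" using True by (cases n) auto
    thus ?thesis using True ij A by (auto simp: block_embed_def)
  next
    case False
    thus ?thesis using ij by (auto simp: block_embed_def)
  qed
qed (auto simp: block_embed_def)

lemma conj_mult:
  fixes S Sinv B C :: "complex mat"
  assumes c: "S \<in> carrier_mat r r" "Sinv \<in> carrier_mat r r" "B \<in> carrier_mat r r" "C \<in> carrier_mat r r"
    and e: "S * Sinv = 1\<^sub>m r"
  shows "(Sinv * B * S) * (Sinv * C * S) = Sinv * (B * C) * S"
proof -
  have e': "S * (Sinv * Z) = Z" if "Z \<in> carrier_mat r r" for Z
    using e c that by (simp add: k_as[where r=r, symmetric])
  show ?thesis using c by (simp add: k_as[where r=r] k_mult_c[where r=r] e')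
qed

lemma conj_transpose:
  fixes S B :: "complex mat"
  assumes c: "S \<in> carrier_mat r r" "B \<in> carrier_mat r r"
  shows "transpose_mat (transpose_mat S * B * S) = transpose_mat S * transpose_mat B * S"
  using c by (simp add: transpose_mult[of _ r r _ r] k_as[where r=r])

context phi_pos
begin

context
  assumes Hsym: "\<forall>A \<in> real_rank1_sym_idems n.
     transpose_mat (\<Phi> (map_mat complex_of_real A)) = \<Phi> (map_mat complex_of_real A)"
begin

lemma Os_symm:
  assumes N: "(\<Sum>i<n. s i * s i) \<noteq> 0"
  shows "transpose_mat (\<Phi> (Os n s)) = \<Phi> (Os n s)"
proof -
  define N where "N = complex_of_real (\<Sum>i<n. s i * s i)"
  have N0: "N \<noteq> 0" unfolding N_def using N of_real_eq_0_iff by blast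
  define M where "M = \<Phi> (Os n s)"
  have M: "M \<in> carrier_mat r r" using into[OF sym_Os] by (simp add: M_def)
  have "transpose_mat (\<Phi> ((1/N) \<cdot>\<^sub>m Os n s)) = \<Phi> ((1/N) \<cdot>\<^sub>m Os n s)"
  proof -
    define R where "R = mat n n (\<lambda>(i,j). s i * s j / (\<Sum>i<n. s i * s i))"
    have "transpose_mat (\<Phi> (map_mat complex_of_real R)) = \<Phi> (map_mat complex_of_real R)"
      using Hsym outer_rank1[OF N] unfolding R_def by blast
    moreover have "map_mat complex_of_real R = (1/N) \<cdot>\<^sub>m Os n s"
      unfolding R_def N_def by (rule Os_map[OF N])
    ultimately show ?thesis by simp
  qed
  hence e: "transpose_mat ((1/N) \<cdot>\<^sub>m M) = (1/N) \<cdot>\<^sub>m M" using homog[OF sym_Os] by (simp add: M_def)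
  show ?thesis unfolding M_def[symmetric]
  proof (rule eq_matI)
    fix i j assume "i < dim_row M" "j < dim_col M"
    hence ij: "i < r" "j < r" using M by auto
    have "(1/N) * M $$ (j,i) = (1/N) * M $$ (i,j)"
      using arg_cong[OF e, of "\<lambda>A. A$$(i,j)"] ij M by simp
    thus "transpose_mat M $$ (i,j) = M $$ (i,j)" using N0 ij M by simp
  qed (use M in auto)
qed

lemma P_symm: "a < n \<Longrightarrow> transpose_mat (\<Phi> (Ec n a)) = \<Phi> (Ec n a)"
  using Os_symm[of "dl a"] N1[of a] O1[of n a] by simp

lemma G_symm: assumes ab: "a < n" "b < n" "a \<noteq> b" shows "transpose_mat (\<Phi> (Fc n a b)) = \<Phi> (Fc n a b)"
proof -
  define X where "X = \<Phi> (Ec n a)"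
  define Y where "Y = \<Phi> (Ec n b)"
  define G where "G = \<Phi> (Fc n a b)"
  have c: "X \<in> carrier_mat r r" "Y \<in> carrier_mat r r" "G \<in> carrier_mat r r"
    using into sym_Ec sym_Fc by (auto simp: X_def Y_def G_def)
  have "\<Phi> (Os n (\<lambda>i. dl a i + dl b i)) = X + G + Y"
    unfolding O2[OF ab(3)] X_def Y_def G_def by (simp add: Phi_add symfacts)
  hence e: "transpose_mat (X + G + Y) = X + G + Y" using Os_symm[of "\<lambda>i. dl a i + dl b i"] N2[OF ab] by simp
  have tx: "transpose_mat X = X" "transpose_mat Y = Y" using P_symm ab by (auto simp: X_def Y_def)
  show ?thesis unfolding G_def[symmetric]
  proof (rule eq_matI)
    fix i j assume "i < dim_row G" "j < dim_col G"
    hence ij: "i < r" "j < r" using c by auto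
    have "X$$(j,i) + G$$(j,i) + Y$$(j,i) = X$$(i,j) + G$$(i,j) + Y$$(i,j)"
      using arg_cong[OF e, of "\<lambda>A. A$$(i,j)"] ij c by (simp add: add.assoc)
    moreover have "X$$(j,i) = X$$(i,j)" "Y$$(j,i) = Y$$(i,j)"
      using arg_cong[OF tx(1), of "\<lambda>A. A$$(i,j)"] arg_cong[OF tx(2), of "\<lambda>A. A$$(i,j)"] ij c by auto
    ultimately show "transpose_mat G $$ (i,j) = G $$ (i,j)" using ij c by simp
  qed (use c in auto)
qed

lemma T_symm: assumes ab: "a < n" "b < n" shows "transpose_mat (pr.T a b) = pr.T b a"
proof (cases "a = b")
  case True thus ?thesis using P_symm ab by (simp add: pr.T_def)
next
  case False
  have "transpose_mat (\<Phi> (Ec n a) * \<Phi> (Fc n a b)) = transpose_mat (\<Phi> (Fc n a b)) * transpose_mat (\<Phi> (Ec n a))"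
    by (rule transpose_mult[of _ r r _ r]) (use into sym_Ec sym_Fc in auto)
  also have "\<dots> = \<Phi> (Fc n a b) * \<Phi> (Ec n a)" using P_symm G_symm ab False by simp
  also have "\<dots> = \<Phi> (Ec n b) * \<Phi> (Fc n b a)" using pair_facts(3)[OF ab False] Fc_sym[of n a b] by simp
  finally show ?thesis using False by (simp add: pr.T_def)
qed

end

end

lemma real_idem_facts:
  assumes "A \<in> real_rank1_sym_idems n"
  shows "map_mat complex_of_real A \<in> sym_mats n"
    "map_mat complex_of_real A * map_mat complex_of_real A = map_mat complex_of_real A"
proof -
  have A: "A \<in> carrier_mat n n" "transpose_mat A = A" "A * A = A"
    using assms by (auto simp: real_rank1_sym_idems_def)
  have "transpose_mat (map_mat complex_of_real A) = map_mat complex_of_real (transpose_mat A)"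
    by (auto intro!: eq_matI)
  thus "map_mat complex_of_real A \<in> sym_mats n" using A by (simp add: sym_mats_def)
  have "map_mat complex_of_real (A * A) = map_mat complex_of_real A * map_mat complex_of_real A"
    by (rule of_real_hom.mat_hom_mult[OF A(1) A(1)])
  thus "map_mat complex_of_real A * map_mat complex_of_real A = map_mat complex_of_real A" using A by simp
qed

lemma rank1_empty0: "real_rank1_sym_idems 0 = {}"
proof -
  have "vec_space.rank 0 A = 0" if "A \<in> carrier_mat 0 0" for A :: "real mat"
    using vec_space.rank_le_nc[OF that] by simp
  thus ?thesis by (auto simp: real_rank1_sym_idems_def)
qed

theorem theorem4p10:
  fixes n r :: nat and \<Phi> :: "complex mat \<Rightarrow> complex mat"
  assumes into: "\<And>A. A \<in> sym_mats n \<Longrightarrow> \<Phi> A \<in> carrier_mat r r"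
    and additive: "\<And>A B. A \<in> sym_mats n \<Longrightarrow> B \<in> sym_mats n \<Longrightarrow> \<Phi> (A + B) = \<Phi> A + \<Phi> B"
    and homog: "\<And>c A. A \<in> sym_mats n \<Longrightarrow> \<Phi> (c \<cdot>\<^sub>m A) = c \<cdot>\<^sub>m \<Phi> A"
    and zero_prod: "\<And>A B. A \<in> sym_mats n \<Longrightarrow> B \<in> sym_mats n \<Longrightarrow> A * B = 0\<^sub>m n n
                      \<Longrightarrow> \<Phi> A * \<Phi> B = 0\<^sub>m r r"
  shows "((\<forall>A \<in> real_rank1_sym_idems n.
             \<Phi> (map_mat complex_of_real A) * \<Phi> (map_mat complex_of_real A)
               = \<Phi> (map_mat complex_of_real A))
          \<longleftrightarrow>
          (\<exists>k S Sinv. k * n \<le> r \<and> S \<in> carrier_mat r r \<and> Sinv \<in> carrier_mat r r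
             \<and> S * Sinv = 1\<^sub>m r \<and> Sinv * S = 1\<^sub>m r
             \<and> (\<forall>A \<in> sym_mats n. \<Phi> A = Sinv * block_embed r k n A * S)))
       \<and>
         ((\<forall>A \<in> real_rank1_sym_idems n.
             \<Phi> (map_mat complex_of_real A) * \<Phi> (map_mat complex_of_real A)
               = \<Phi> (map_mat complex_of_real A)
             \<and> transpose_mat (\<Phi> (map_mat complex_of_real A)) = \<Phi> (map_mat complex_of_real A))
          \<longleftrightarrow>
          (\<exists>k S. k * n \<le> r \<and> S \<in> carrier_mat r r
             \<and> S * transpose_mat S = 1\<^sub>m r \<and> transpose_mat S * S = 1\<^sub>m r
             \<and> (\<forall>A \<in> sym_mats n. \<Phi> A = transpose_mat S * block_embed r k n A * S)))"
proof -
  have Phi0: "\<Phi> (0\<^sub>m n n) = 0\<^sub>m r r"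
  proof -
    have z: "0\<^sub>m n n \<in> sym_mats n" by (auto simp: sym_mats_def intro!: eq_matI)
    have "\<Phi> (0 \<cdot>\<^sub>m 0\<^sub>m n n) = 0 \<cdot>\<^sub>m \<Phi> (0\<^sub>m n n)" by (rule homog[OF z])
    moreover have "(0::complex) \<cdot>\<^sub>m 0\<^sub>m n n = 0\<^sub>m n n" by (auto intro!: eq_matI)
    moreover have "(0::complex) \<cdot>\<^sub>m \<Phi> (0\<^sub>m n n) = 0\<^sub>m r r" using into[OF z] by (auto intro!: eq_matI)
    ultimately show ?thesis by simp
  qed
  have zcase: "\<Phi> A = 0\<^sub>m r r" "block_embed r k n A = 0\<^sub>m r r" if "n = 0" "A \<in> sym_mats n" for A k
  proof -
    have "A = 0\<^sub>m n n" using that by (auto simp: sym_mats_def intro!: eq_matI)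
    thus "\<Phi> A = 0\<^sub>m r r" using Phi0 by simp
    show "block_embed r k n A = 0\<^sub>m r r" using that by (auto simp: block_embed_def intro!: eq_matI)
  qed
  have part1: "(\<forall>A \<in> real_rank1_sym_idems n.
             \<Phi> (map_mat complex_of_real A) * \<Phi> (map_mat complex_of_real A)
               = \<Phi> (map_mat complex_of_real A))
          \<longleftrightarrow>
          (\<exists>k S Sinv. k * n \<le> r \<and> S \<in> carrier_mat r r \<and> Sinv \<in> carrier_mat r r
             \<and> S * Sinv = 1\<^sub>m r \<and> Sinv * S = 1\<^sub>m r
             \<and> (\<forall>A \<in> sym_mats n. \<Phi> A = Sinv * block_embed r k n A * S))" (is "?L \<longleftrightarrow> ?R")
  proof
    assume L: ?L
    show ?R
    proof (cases "n = 0")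
      case True
      show ?thesis using zcase True
        by (intro exI[of _ 0] exI[of _ "1\<^sub>m r"]) auto
    next
      case False
      interpret ph: phi_pos n r \<Phi>
        by unfold_locales (use into additive homog zero_prod L False in auto)
      obtain k Si So where k: "k*n \<le> r" "So \<in> carrier_mat r r" "Si \<in> carrier_mat r r" "So * Si = 1\<^sub>m r"
        "Si * So = 1\<^sub>m r" and eq: "\<forall>A\<in>carrier_mat n n. Si * block_embed r k n A * So = ph.ms.Psi A"
        using ph.ms.exists_S by blast
      show ?thesis using k eq ph.Phi_Psi sym_carrier
        by (intro exI[of _ k] exI[of _ So] exI[of _ Si]) auto
    qed
  next
    assume ?R
    then obtain k S Sinv where k: "k*n \<le> r" "S \<in> carrier_mat r r" "Sinv \<in> carrier_mat r r"
      "S * Sinv = 1\<^sub>m r" and eq: "\<forall>A \<in> sym_mats n. \<Phi> A = Sinv * block_embed r k n A * S" by blast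
    show ?L
    proof
      fix A assume A: "A \<in> real_rank1_sym_idems n"
      define C where "C = map_mat complex_of_real A"
      have C: "C \<in> sym_mats n" "C * C = C" using real_idem_facts[OF A] by (auto simp: C_def)
      have "\<Phi> C * \<Phi> C = Sinv * (block_embed r k n C * block_embed r k n C) * S"
        using eq C(1) k by (simp add: conj_mult)
      also have "\<dots> = \<Phi> C" using block_embed_mult[OF sym_carrier[OF C(1)] sym_carrier[OF C(1)] k(1)] C eq by simp
      finally show "\<Phi> (map_mat complex_of_real A) * \<Phi> (map_mat complex_of_real A) = \<Phi> (map_mat complex_of_real A)"
        by (simp add: C_def)
    qed
  qed
  have part2: "(\<forall>A \<in> real_rank1_sym_idems n.
             \<Phi> (map_mat complex_of_real A) * \<Phi> (map_mat complex_of_real A)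
               = \<Phi> (map_mat complex_of_real A)
             \<and> transpose_mat (\<Phi> (map_mat complex_of_real A)) = \<Phi> (map_mat complex_of_real A))
          \<longleftrightarrow>
          (\<exists>k S. k * n \<le> r \<and> S \<in> carrier_mat r r
             \<and> S * transpose_mat S = 1\<^sub>m r \<and> transpose_mat S * S = 1\<^sub>m r
             \<and> (\<forall>A \<in> sym_mats n. \<Phi> A = transpose_mat S * block_embed r k n A * S))" (is "?L \<longleftrightarrow> ?R")
  proof
    assume L: ?L
    show ?R
    proof (cases "n = 0")
      case True
      show ?thesis using zcase True
        by (intro exI[of _ 0] exI[of _ "1\<^sub>m r"]) auto
    next
      case False
      interpret ph: phi_pos n r \<Phi>
        by unfold_locales (use into additive homog zero_prod L False in auto)
      have Hsym: "\<forall>A \<in> real_rank1_sym_idems n.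
         transpose_mat (\<Phi> (map_mat complex_of_real A)) = \<Phi> (map_mat complex_of_real A)" using L by blast
      obtain k S where k: "k*n \<le> r" "S \<in> carrier_mat r r" "S * transpose_mat S = 1\<^sub>m r" "transpose_mat S * S = 1\<^sub>m r"
        and eq: "\<forall>A\<in>carrier_mat n n. transpose_mat S * block_embed r k n A * S = ph.ms.Psi A"
        using ph.ms.exists_S_orth[OF ph.T_symm[OF Hsym]] by blast
      show ?thesis using k eq ph.Phi_Psi sym_carrier
        by (intro exI[of _ k] exI[of _ S]) auto
    qed
  next
    assume ?R
    then obtain k S where k: "k*n \<le> r" "S \<in> carrier_mat r r"
      "S * transpose_mat S = 1\<^sub>m r" and eq: "\<forall>A \<in> sym_mats n. \<Phi> A = transpose_mat S * block_embed r k n A * S" by blast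
    show ?L
    proof
      fix A assume A: "A \<in> real_rank1_sym_idems n"
      define C where "C = map_mat complex_of_real A"
      have C: "C \<in> sym_mats n" "C * C = C" using real_idem_facts[OF A] by (auto simp: C_def)
      have St: "transpose_mat S \<in> carrier_mat r r" using k by simp
      have "\<Phi> C * \<Phi> C = transpose_mat S * (block_embed r k n C * block_embed r k n C) * S"
        using eq C(1) k St by (simp add: conj_mult)
      also have "\<dots> = \<Phi> C" using block_embed_mult[OF sym_carrier[OF C(1)] sym_carrier[OF C(1)] k(1)] C eq by simp
      finally have 1: "\<Phi> C * \<Phi> C = \<Phi> C" .
      have "transpose_mat (\<Phi> C) = transpose_mat S * transpose_mat (block_embed r k n C) * S"
        using eq C(1) k by (simp add: conj_transpose)
      also have "\<dots> = \<Phi> C" using block_embed_transpose[OF sym_carrier[OF C(1)]] C(1) eq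
        by (simp add: sym_mats_def)
      finally show "\<Phi> (map_mat complex_of_real A) * \<Phi> (map_mat complex_of_real A) = \<Phi> (map_mat complex_of_real A)
             \<and> transpose_mat (\<Phi> (map_mat complex_of_real A)) = \<Phi> (map_mat complex_of_real A)"
        using 1 by (simp add: C_def)
    qed
  qed
  show ?thesis using part1 part2 by blast
qed

end
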